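(* Let $\mathcal N$ and $\mathcal M$ be quantum channels satisfying $s$-detailed balance with respect to $\rho_\beta$, with $\mathcal N$ having $\rho_\beta$ as unique fixed state and spectrum in $[0,1]$. Suppose the map $\widehat{\mathcal M}$ also satisfies $s$-detailed balance, and $\mathbb V_{\rho_\beta}(\mathcal M)>0$. Then for every integer $K\ge1$, $$t_{aut,K}\le \frac{\mathbf p}{\mathrm{gap}(\mathcal N)}+\frac12,\qquad \mathbf p:=\frac{\mathrm{Cov}_{\rho_\beta}(\mathcal M)}{\mathbb V_{\rho_\beta}(\mathcal M)}.$$
   Context: Let $H$ be a Hermitian operator on $n$ qubits, $\beta>0$, $\rho_\beta=e^{-\beta H}/\operatorname{tr}(e^{-\beta H})$. Quantum channels are CPTP maps $\mathcal T(X)=\sum_uK_uXK_u^\dagger$; $\mathcal T^\dagger$ denotes the Hilbert–Schmidt adjoint of a linear map (for a channel, $\mathcal T^\dagger(X)=\sum_uK_u^\dagger XK_u$). $\langle A,B\rangle_s=\operatorname{tr}(A^\dagger\rho_\beta^{1-s}B\rho_\beta^s)$; a linear map $\mathcal T$ satisfies $s$-detailed balance if $\langle A,\mathcal T^\dagger(B)\rangle_s=\langle\mathcal T^\dagger(A),B\rangle_s$ for all $A,B$. For a channel satisfying $s$-detailed balance, $\mathrm{gap}(\mathcal T)=1-\max_{X\ne0,\langle X,I\rangle_s=0}\langle X,\mathcal T^\dagger(X)\rangle_s/\langle X,X\rangle_s$. $\mathcal M$ has Kraus operators $\{O_u\}_u$ indexed by finitely many real outcomes $u$; $\mathbb E_\rho(\mathcal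 M)=\sum_uu\operatorname{tr}(O_u\rho O_u^\dagger)$, $\mathbb V_\rho(\mathcal M)=\sum_u|u-\mathbb E_\rho(\mathcal M)|^2\operatorname{tr}(O_u\rho O_u^\dagger)$, $\mathrm{Cov}_\rho(\mathcal M)=\sum_{x,y}(x-\mathbb E_\rho(\mathcal M))(y-\mathbb E_\rho(\mathcal M))\operatorname{tr}(O_yO_x\rho O_x^\dagger O_y^\dagger)$. Define $\widehat{\mathcal M}(X)=\sum_u(u-\mathbb E_{\rho_\beta}(\mathcal M))O_uXO_u^\dagger$, $\mathcal E=\mathcal M\circ\mathcal N\circ\mathcal M$, $\widehat{\mathcal E}=\mathcal M\circ\mathcal N\circ\widehat{\mathcal M}$, $\mathrm{Cor}_{\rho_\beta}(\mathcal E^t)=\operatorname{tr}(\widehat{\mathcal E}\circ\mathcal E^t\circ\widehat{\mathcal E}(\rho_\beta))$ for $t\ge0$, $C(t)=\mathrm{Cor}_{\rho_\beta}(\mathcal E^t)/\mathbb V_{\rho_\beta}(\mathcal M)$, and the finite-size integrated autocorrelation time $t_{aut,K}=\frac12+\sum_{t=1}^K(1-\frac tK)C(t-1)$. *)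

theory Defs
  imports "HOL-Analysis.Analysis"
begin

text \<open>Operators on the Hilbert space of n qubits are complex matrices indexed by a finite
  type 'd with CARD('d) = 2^n.\<close>

type_synonym 'd cmat = "complex^'d^'d"

definition cscale :: "complex \<Rightarrow> 'd::finite cmat \<Rightarrow> 'd cmat" where
  "cscale c A = (\<chi> i j. c * A $ i $ j)"

definition adj :: "'d::finite cmat \<Rightarrow> 'd cmat" where
  "adj A = (\<chi> i j. cnj (A $ j $ i))"

definition hermitian :: "'d::finite cmat \<Rightarrow> bool" where
  "hermitian A \<longleftrightarrow> adj A = A"

definition psd :: "'d::finite cmat \<Rightarrow> bool" where
  "psd A \<longleftrightarrow> (\<forall>v::complex^'d. let q = (\<Sum>i\<in>UNIV. \<Sum>j\<in>UNIV. cnj (v $ i) * A $ i $ j * v $ j)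
                                      in Im q = 0 \<and> Re q \<ge> 0)"

definition density :: "'d::finite cmat \<Rightarrow> bool" where
  "density A \<longleftrightarrow> hermitian A \<and> psd A \<and> trace A = 1"

definition mpow :: "'d::finite cmat \<Rightarrow> nat \<Rightarrow> 'd cmat" where
  "mpow A k = ((\<lambda>B. A ** B) ^^ k) (mat 1)"

definition mexp :: "'d::finite cmat \<Rightarrow> 'd cmat" where
  "mexp A = (\<Sum>k. (1 / fact k) *\<^sub>R mpow A k)"

definition partZ :: "real \<Rightarrow> 'd::finite cmat \<Rightarrow> real" where
  "partZ \<beta> H = Re (trace (mexp (- (\<beta> *\<^sub>R H))))"

definition gibbs :: "real \<Rightarrow> 'd::finite cmat \<Rightarrow> 'd cmat" where
  "gibbs \<beta> H = (1 / partZ \<beta> H) *\<^sub>R mexp (- (\<beta> *\<^sub>R H))"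

definition gibbs_pow :: "real \<Rightarrow> 'd::finite cmat \<Rightarrow> real \<Rightarrow> 'd cmat" where
  "gibbs_pow \<beta> H r = (1 / (partZ \<beta> H powr r)) *\<^sub>R mexp (- ((r * \<beta>) *\<^sub>R H))"

definition sip :: "real \<Rightarrow> 'd::finite cmat \<Rightarrow> real \<Rightarrow> 'd cmat \<Rightarrow> 'd cmat \<Rightarrow> complex" where
  "sip \<beta> H s A B = trace (adj A ** gibbs_pow \<beta> H (1 - s) ** B ** gibbs_pow \<beta> H s)"

definition wkraus :: "'a set \<Rightarrow> ('a \<Rightarrow> real) \<Rightarrow> ('a \<Rightarrow> 'd::finite cmat) \<Rightarrow> 'd cmat \<Rightarrow> 'd cmat" where
  "wkraus I w K X = (\<Sum>u\<in>I. w u *\<^sub>R (K u ** X ** adj (K u)))"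

definition wkraus_adj :: "'a set \<Rightarrow> ('a \<Rightarrow> real) \<Rightarrow> ('a \<Rightarrow> 'd::finite cmat) \<Rightarrow> 'd cmat \<Rightarrow> 'd cmat" where
  "wkraus_adj I w K X = (\<Sum>u\<in>I. w u *\<^sub>R (adj (K u) ** X ** K u))"

definition kraus :: "'a set \<Rightarrow> ('a \<Rightarrow> 'd::finite cmat) \<Rightarrow> 'd cmat \<Rightarrow> 'd cmat" where
  "kraus I K = wkraus I (\<lambda>_. 1) K"

definition kraus_adj :: "'a set \<Rightarrow> ('a \<Rightarrow> 'd::finite cmat) \<Rightarrow> 'd cmat \<Rightarrow> 'd cmat" where
  "kraus_adj I K = wkraus_adj I (\<lambda>_. 1) K"

definition is_channel :: "'a set \<Rightarrow> ('a \<Rightarrow> 'd::finite cmat) \<Rightarrow> bool" where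
  "is_channel I K \<longleftrightarrow> finite I \<and> (\<Sum>u\<in>I. adj (K u) ** K u) = mat 1"

text \<open>s-detailed balance of a map T given through its HS adjoint Tadj.\<close>
definition detailed_balance :: "real \<Rightarrow> 'd::finite cmat \<Rightarrow> real \<Rightarrow> ('d cmat \<Rightarrow> 'd cmat) \<Rightarrow> bool" where
  "detailed_balance \<beta> H s Tadj \<longleftrightarrow>
     (\<forall>A B. sip \<beta> H s A (Tadj B) = sip \<beta> H s (Tadj A) B)"

definition gap :: "real \<Rightarrow> 'd::finite cmat \<Rightarrow> real \<Rightarrow> ('d cmat \<Rightarrow> 'd cmat) \<Rightarrow> real" where
  "gap \<beta> H s Tadj = 1 - Sup {Re (sip \<beta> H s X (Tadj X) / sip \<beta> H s X X) | X.
                                X \<noteq> 0 \<and> sip \<beta> H s X (mat 1) = 0}"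

text \<open>Measurement statistics of the channel with outcomes u in U and Kraus operators Ob u.\<close>
definition Exp :: "real set \<Rightarrow> (real \<Rightarrow> 'd::finite cmat) \<Rightarrow> 'd cmat \<Rightarrow> real" where
  "Exp U Ob \<rho> = (\<Sum>u\<in>U. u * Re (trace (Ob u ** \<rho> ** adj (Ob u))))"

definition Var :: "real set \<Rightarrow> (real \<Rightarrow> 'd::finite cmat) \<Rightarrow> 'd cmat \<Rightarrow> real" where
  "Var U Ob \<rho> = (\<Sum>u\<in>U. \<bar>u - Exp U Ob \<rho>\<bar>\<^sup>2 * Re (trace (Ob u ** \<rho> ** adj (Ob u))))"

definition Cov :: "real set \<Rightarrow> (real \<Rightarrow> 'd::finite cmat) \<Rightarrow> 'd cmat \<Rightarrow> real" where
  "Cov U Ob \<rho> = (\<Sum>x\<in>U. \<Sum>y\<in>U. (x - Exp U Ob \<rho>) * (y - Exp U Ob \<rho>) *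
        Re (trace (Ob y ** Ob x ** \<rho> ** adj (Ob x) ** adj (Ob y))))"

definition Mhat :: "real \<Rightarrow> 'd::finite cmat \<Rightarrow> real set \<Rightarrow> (real \<Rightarrow> 'd cmat) \<Rightarrow> 'd cmat \<Rightarrow> 'd cmat" where
  "Mhat \<beta> H U Ob = wkraus U (\<lambda>u. u - Exp U Ob (gibbs \<beta> H)) Ob"

definition Mhat_adj :: "real \<Rightarrow> 'd::finite cmat \<Rightarrow> real set \<Rightarrow> (real \<Rightarrow> 'd cmat) \<Rightarrow> 'd cmat \<Rightarrow> 'd cmat" where
  "Mhat_adj \<beta> H U Ob = wkraus_adj U (\<lambda>u. u - Exp U Ob (gibbs \<beta> H)) Ob"

definition Cor :: "real \<Rightarrow> 'd::finite cmat \<Rightarrow> 'a set \<Rightarrow> ('a \<Rightarrow> 'd cmat) \<Rightarrow>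
                   real set \<Rightarrow> (real \<Rightarrow> 'd cmat) \<Rightarrow> nat \<Rightarrow> real" where
  "Cor \<beta> H I K U Ob t =
     (let Mc = kraus U Ob; Nc = kraus I K;
          E = Mc \<circ> Nc \<circ> Mc; Ehat = Mc \<circ> Nc \<circ> Mhat \<beta> H U Ob
      in Re (trace (Ehat ((E ^^ t) (Ehat (gibbs \<beta> H))))))"

definition t_aut :: "real \<Rightarrow> 'd::finite cmat \<Rightarrow> 'a set \<Rightarrow> ('a \<Rightarrow> 'd cmat) \<Rightarrow>
                   real set \<Rightarrow> (real \<Rightarrow> 'd cmat) \<Rightarrow> nat \<Rightarrow> real" where
  "t_aut \<beta> H I K U Ob Kn =
     1/2 + (\<Sum>t=1..Kn. (1 - real t / real Kn) *
              (Cor \<beta> H I K U Ob (t - 1) / Var U Ob (gibbs \<beta> H)))"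

end

theory Submission
  imports Defs
begin


lemma adj_nth[simp]: "adj A $ i $ j = cnj (A $ j $ i)" by (simp add: adj_def)
lemma adj_adj[simp]: "adj (adj A) = A" by (simp add: adj_def vec_eq_iff)
lemma adj_mult: "adj (A ** B) = adj B ** adj A"
  by (simp add: vec_eq_iff matrix_matrix_mult_def mult.commute)
lemma adj_add: "adj (A + B) = adj A + adj B" by (simp add: vec_eq_iff)
lemma adj_diff: "adj (A - B) = adj A - adj B" by (simp add: vec_eq_iff)
lemma adj_minus: "adj (- A) = - adj A" by (simp add: vec_eq_iff)
lemma adj_zero[simp]: "adj 0 = 0" by (simp add: vec_eq_iff)
lemma adj_scaleR: "adj (r *\<^sub>R A) = r *\<^sub>R adj A" by (simp add: vec_eq_iff)
lemma adj_mat1[simp]: "adj (mat 1 :: 'd::finite cmat) = mat 1" by (simp add: vec_eq_iff mat_def)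
lemma adj_sum: "adj (sum f S) = (\<Sum>x\<in>S. adj (f x))"
  by (simp add: vec_eq_iff)
lemma adj_eq_iff: "adj A = adj B \<longleftrightarrow> A = B"
  by (metis adj_adj)
lemma cscale_nth[simp]: "cscale c A $ i $ j = c * A $ i $ j" by (simp add: cscale_def)
lemma adj_cscale: "adj (cscale c A) = cscale (cnj c) (adj A)" by (simp add: vec_eq_iff)

lemma trace_adj: "trace (adj A) = cnj (trace A)" by (simp add: trace_def)
lemma trace_scaleR: "trace (r *\<^sub>R A) = of_real r * trace (A::'d::finite cmat)"
  unfolding trace_def by (simp add: sum_distrib_left) (simp add: scaleR_conv_of_real)
lemma trace_cscale: "trace (cscale c A) = c * trace A"
  by (simp add: trace_def sum_distrib_left)
lemma trace_sum: "trace (sum f S) = (\<Sum>x\<in>S. trace (f x))"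
  unfolding trace_def by (simp add: sum.swap[of _ UNIV])
lemma trace_minus: "trace (- A) = - trace (A::'d::finite cmat)"
  by (simp add: trace_def sum_negf)

lemma scaleR_mult_left: "(r *\<^sub>R A) ** B = r *\<^sub>R (A ** (B::'d::finite cmat))"
  by (simp add: vec_eq_iff matrix_matrix_mult_def scaleR_sum_right)
lemma scaleR_mult_right: "A ** (r *\<^sub>R B) = r *\<^sub>R (A ** (B::'d::finite cmat))"
  by (simp add: vec_eq_iff matrix_matrix_mult_def scaleR_sum_right)
lemma cscale_mult_left: "(cscale c A) ** B = cscale c (A ** (B::'d::finite cmat))"
  by (simp add: vec_eq_iff matrix_matrix_mult_def sum_distrib_left mult.assoc)
lemma cscale_mult_right: "A ** (cscale c B) = cscale c (A ** (B::'d::finite cmat))"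
  by (simp add: vec_eq_iff matrix_matrix_mult_def sum_distrib_left mult.left_commute)
lemma sum_mult_left: "(sum f S) ** (B::'d::finite cmat) = (\<Sum>x\<in>S. f x ** B)"
  by (simp add: vec_eq_iff matrix_matrix_mult_def sum_distrib_right sum.swap[of _ S])
lemma sum_mult_right: "(B::'d::finite cmat) ** (sum f S) = (\<Sum>x\<in>S. B ** f x)"
  by (simp add: vec_eq_iff matrix_matrix_mult_def sum_distrib_left sum.swap[of _ S])
lemma add_mult_left: "(A + B) ** (C::'d::finite cmat) = A ** C + B ** C"
  by (simp add: vec_eq_iff matrix_matrix_mult_def sum.distrib distrib_right)
lemma diff_mult_left: "(A - B) ** (C::'d::finite cmat) = A ** C - B ** C"
  by (simp add: vec_eq_iff matrix_matrix_mult_def sum_subtractf left_diff_distrib)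
lemma diff_mult_right: "C ** (A - B) = C ** A - C ** (B::'d::finite cmat)"
  by (simp add: vec_eq_iff matrix_matrix_mult_def sum_subtractf right_diff_distrib)
lemma minus_mult_left: "(- A) ** (C::'d::finite cmat) = - (A ** C)"
  by (simp add: vec_eq_iff matrix_matrix_mult_def sum_negf)
lemma minus_mult_right: "C ** (- A) = - (C ** (A::'d::finite cmat))"
  by (simp add: vec_eq_iff matrix_matrix_mult_def sum_negf)

lemma frob: "trace (adj A ** A) = (\<Sum>i\<in>UNIV. \<Sum>j\<in>UNIV. of_real ((cmod (A$j$i))\<^sup>2))"
  unfolding trace_def matrix_matrix_mult_def
  by (intro sum.cong refl) (simp add: complex_norm_square mult.commute del: of_real_power)


lemma frob_Re: "Re (trace (adj A ** A)) = (\<Sum>i\<in>UNIV. \<Sum>j\<in>UNIV. (cmod (A$j$i))\<^sup>2)"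
  by (simp add: frob Re_sum)

lemma frob_nonneg: "0 \<le> Re (trace (adj A ** A))"
  by (simp add: frob_Re sum_nonneg)

lemma frob_Im: "Im (trace (adj A ** A)) = 0"
  by (simp add: frob)

lemma frob_zero: "trace (adj A ** A) = 0 \<longleftrightarrow> A = (0::'d::finite cmat)"
proof
  assume "trace (adj A ** A) = 0"
  then have "(\<Sum>i\<in>UNIV. \<Sum>j\<in>UNIV. (cmod (A$j$i))\<^sup>2) = 0"
    using frob_Re[of A] by simp
  then have "\<forall>i\<in>UNIV. (\<Sum>j\<in>UNIV. (cmod (A$j$i))\<^sup>2) = 0"
    by (subst (asm) sum_nonneg_eq_0_iff) (auto intro: sum_nonneg)
  then have "\<forall>i j. (cmod (A$j$i))\<^sup>2 = 0"
    by (simp add: sum_nonneg_eq_0_iff)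
  then show "A = 0" by (simp add: vec_eq_iff)
qed (simp add: trace_def)

lemma frob_pos: "A \<noteq> (0::'d::finite cmat) \<Longrightarrow> 0 < Re (trace (adj A ** A))"
  using frob_nonneg[of A] frob_zero[of A] frob_Im[of A]
  by (metis complex_eq_iff order_le_less zero_complex.simps)

lemma trace_adj_eq_zero: "(\<And>A. trace (adj A ** D) = 0) \<Longrightarrow> D = (0::'d::finite cmat)"
  using frob_zero by blast

lemma mat1_nonzero: "mat 1 \<noteq> (0::'d::finite cmat)"
  by (simp add: vec_eq_iff mat_def)



section \<open>Matrix powers and exponential\<close>

lemma mpow_0[simp]: "mpow A 0 = mat 1" by (simp add: mpow_def)
lemma mpow_Suc: "mpow A (Suc k) = A ** mpow A k" by (simp add: mpow_def)

lemma mpow_add: "mpow A (k + m) = mpow A k ** mpow (A::'d::finite cmat) m"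
  by (induction k) (simp_all add: mpow_Suc matrix_mul_assoc)

lemma mpow_comm: "mpow A k ** A = A ** mpow (A::'d::finite cmat) k"
  using mpow_add[of A k 1] mpow_add[of A 1 k] by (simp add: mpow_Suc add.commute)

lemma mpow_scaleR: "mpow (c *\<^sub>R A) k = (c ^ k) *\<^sub>R mpow (A::'d::finite cmat) k"
  by (induction k) (simp_all add: mpow_Suc scaleR_mult_left scaleR_mult_right)

lemma adj_mpow: "adj (mpow A k) = mpow (adj A) k"
  by (induction k) (simp_all add: mpow_Suc adj_mult mpow_comm)

lemma mpow_zero: "k > 0 \<Longrightarrow> mpow (0::'d::finite cmat) k = 0"
  by (cases k) (simp_all add: mpow_Suc)

definition bnd :: "'d::finite cmat \<Rightarrow> real" where
  "bnd A = (\<Sum>i\<in>UNIV. \<Sum>j\<in>UNIV. cmod (A$i$j))"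

lemma bnd_nonneg: "0 \<le> bnd A" by (simp add: bnd_def sum_nonneg)

lemma row_le_bnd: "(\<Sum>l\<in>UNIV. cmod (A$i$l)) \<le> bnd A"
  unfolding bnd_def
  by (rule member_le_sum[where f="\<lambda>i. \<Sum>l\<in>UNIV. cmod (A$i$l)"]) (auto intro: sum_nonneg)

lemma entry_le_bnd: "cmod (A$i$j) \<le> bnd A"
  using row_le_bnd[of A i] member_le_sum[of j UNIV "\<lambda>l. cmod (A$i$l)"] by force

lemma mpow_entry_bound: "cmod (mpow A k $ i $ j) \<le> bnd A ^ k"
proof (induction k arbitrary: i j)
  case 0
  then show ?case by (simp add: mat_def)
next
  case (Suc k)
  have "cmod (mpow A (Suc k) $ i $ j) = cmod (\<Sum>l\<in>UNIV. A$i$l * mpow A k $ l $ j)"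
    by (simp add: mpow_Suc matrix_matrix_mult_def)
  also have "\<dots> \<le> (\<Sum>l\<in>UNIV. cmod (A$i$l) * cmod (mpow A k $ l $ j))"
    by (rule order_trans[OF norm_sum]) (simp add: norm_mult)
  also have "\<dots> \<le> (\<Sum>l\<in>UNIV. cmod (A$i$l) * bnd A ^ k)"
    by (intro sum_mono mult_left_mono Suc) auto
  also have "\<dots> \<le> bnd A * bnd A ^ k"
    by (simp add: sum_distrib_right[symmetric] mult_right_mono row_le_bnd bnd_nonneg)
  finally show ?case by simp
qed

lemma norm_mat_le: "norm (M::'d::finite cmat) \<le> (\<Sum>i\<in>UNIV. \<Sum>j\<in>UNIV. cmod (M$i$j))"
proof -
  have "norm M \<le> (\<Sum>i\<in>UNIV. norm (M$i))"
    unfolding norm_vec_def by (rule L2_set_le_sum) simp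
  also have "\<dots> \<le> (\<Sum>i\<in>UNIV. \<Sum>j\<in>UNIV. cmod (M$i$j))"
    by (intro sum_mono) (unfold norm_vec_def, rule L2_set_le_sum, simp)
  finally show ?thesis .
qed

lemma norm_mat_le_bnd: "norm (M::'d::finite cmat) \<le> bnd M"
  using norm_mat_le[of M] by (simp add: bnd_def)

lemma bnd_scaleR: "bnd (c *\<^sub>R M) = \<bar>c\<bar> * bnd M"
  by (simp add: bnd_def sum_distrib_left)

lemma bnd_mpow: "bnd (mpow A k) \<le> real (CARD('d)) * real (CARD('d)) * bnd (A::'d::finite cmat) ^ k"
proof -
  have "bnd (mpow A k) \<le> (\<Sum>i\<in>(UNIV::'d set). \<Sum>j\<in>(UNIV::'d set). bnd A ^ k)"
    by (simp only: bnd_def[of "mpow A k"]) (intro sum_mono mpow_entry_bound)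
  then show ?thesis by simp
qed

lemma mexp_summable: "summable (\<lambda>k. (1 / fact k) *\<^sub>R mpow (A::'d::finite cmat) k)"
proof (rule summable_norm_cancel, rule summable_comparison_test)
  let ?C = "real (CARD('d)) * real (CARD('d))"
  show "summable (\<lambda>k. ?C * (inverse (fact k) * bnd A ^ k))"
    by (intro summable_mult summable_exp)
  show "\<exists>N. \<forall>n\<ge>N. norm (norm ((1 / fact n) *\<^sub>R mpow A n)) \<le> ?C * (inverse (fact n) * bnd A ^ n)"
  proof (intro exI allI impI)
    fix n :: nat
    have "norm (norm ((1 / fact n) *\<^sub>R mpow A n)) = (1 / fact n) * norm (mpow A n)"
      by simp
    also have "\<dots> \<le> (1 / fact n) * (?C * bnd A ^ n)"
      by (intro mult_left_mono order_trans[OF norm_mat_le_bnd bnd_mpow]) auto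
    finally show "norm (norm ((1 / fact n) *\<^sub>R mpow A n)) \<le> ?C * (inverse (fact n) * bnd A ^ n)"
      by (simp add: field_simps)
  qed
qed

lemma mexp_sums: "(\<lambda>k. (1 / fact k) *\<^sub>R mpow (A::'d::finite cmat) k) sums mexp A"
  unfolding mexp_def using mexp_summable by (rule summable_sums)

lemma sums_entry: "f sums (S::'d::finite cmat) \<Longrightarrow> (\<lambda>k. f k $ i $ j) sums (S $ i $ j)"
  unfolding sums_def
  by (drule tendsto_vec_nth[where i=i], drule tendsto_vec_nth[where i=j]) simp

lemma mexp_entry_sums:
  "(\<lambda>k. of_real (1 / fact k) * mpow (A::'d::finite cmat) k $ i $ j) sums (mexp A $ i $ j)"
  using sums_entry[OF mexp_sums[of A], of i j] by (simp only: vector_scaleR_component, simp only: scaleR_conv_of_real)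

lemma mexp_adj: "adj (mexp A) = mexp (adj (A::'d::finite cmat))"
proof -
  have "\<And>i j. adj (mexp A) $ i $ j = mexp (adj A) $ i $ j"
  proof -
    fix i j
    have "(\<lambda>k. cnj (of_real (1 / fact k) * mpow A k $ j $ i)) sums cnj (mexp A $ j $ i)"
      using mexp_entry_sums[of A j i] by (simp only: sums_cnj)
    moreover have "(\<lambda>k. cnj (of_real (1 / fact k) * mpow A k $ j $ i)) =
        (\<lambda>k. of_real (1 / fact k) * mpow (adj A) k $ i $ j)"
      by (simp flip: adj_mpow)
    ultimately show "adj (mexp A) $ i $ j = mexp (adj A) $ i $ j"
      using mexp_entry_sums[of "adj A" i j] sums_unique2 by fastforce
  qed
  then show ?thesis by (simp add: vec_eq_iff)
qed

lemma mexp_zero: "mexp (0::'d::finite cmat) = mat 1"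
proof -
  have "(\<lambda>k. (1 / fact k) *\<^sub>R mpow (0::'d cmat) k) = (\<lambda>k. if k = 0 then mat 1 else 0)"
    by (auto simp: mpow_zero)
  moreover have "(\<lambda>k. if k = 0 then (mat 1::'d cmat) else 0) sums mat 1"
    using sums_single[of 0 "\<lambda>_. mat 1 :: 'd cmat"] by simp
  ultimately show ?thesis using mexp_sums[of "0::'d cmat"] sums_unique2 by metis
qed

lemma binom_real: "(\<Sum>k\<le>n. a ^ k * b ^ (n - k) / (fact k * fact (n - k))) = (a + b) ^ n / fact n"
  for a b :: real
proof -
  have "(a + b) ^ n = (\<Sum>k\<le>n. of_nat (n choose k) * a ^ k * b ^ (n - k))"
    by (rule binomial_ring)
  also have "\<dots> = (\<Sum>k\<le>n. fact n * (a ^ k * b ^ (n - k) / (fact k * fact (n - k))))"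
    by (intro sum.cong refl) (simp add: binomial_fact field_simps)
  also have "\<dots> = fact n * (\<Sum>k\<le>n. a ^ k * b ^ (n - k) / (fact k * fact (n - k)))"
    by (simp only: sum_distrib_left)
  finally show ?thesis by simp
qed

lemma mexp_add_scaled:
  "mexp (a *\<^sub>R X) ** mexp (b *\<^sub>R X) = mexp ((a + b) *\<^sub>R (X::'d::finite cmat))"
proof -
  define P where "P = mpow X"
  define al where "al = (\<lambda>(c::real) i l k. of_real (c ^ k / fact k) * P k $ i $ l)"
  have al_sums: "(al c i l) sums (mexp (c *\<^sub>R X) $ i $ l)" for c i l
  proof -
    have "(\<lambda>k. of_real (1 / fact k) * mpow (c *\<^sub>R X) k $ i $ l) = al c i l"
      by (simp only: mpow_scaleR vector_scaleR_component) (simp add: al_def P_def scaleR_conv_of_real field_simps)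
    then show ?thesis using mexp_entry_sums[of "c *\<^sub>R X" i l] by simp
  qed
  have al_norm: "summable (\<lambda>k. norm (al c i l k))" for c i l
  proof (rule summable_comparison_test)
    show "summable (\<lambda>k. inverse (fact k) * (\<bar>c\<bar> * bnd X) ^ k)" by (rule summable_exp)
    show "\<exists>N. \<forall>n\<ge>N. norm (norm (al c i l n)) \<le> inverse (fact n) * (\<bar>c\<bar> * bnd X) ^ n"
    proof (intro exI allI impI)
      fix n :: nat
      have "norm (norm (al c i l n)) = \<bar>c\<bar> ^ n / fact n * cmod (P n $ i $ l)"
        by (simp add: al_def norm_mult norm_divide norm_power)
      also have "\<dots> \<le> \<bar>c\<bar> ^ n / fact n * bnd X ^ n"
        unfolding P_def by (intro mult_left_mono mpow_entry_bound) auto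
      finally show "norm (norm (al c i l n)) \<le> inverse (fact n) * (\<bar>c\<bar> * bnd X) ^ n"
        by (simp add: field_simps power_mult_distrib)
    qed
  qed
  have "(mexp (a *\<^sub>R X) ** mexp (b *\<^sub>R X)) $ i $ j = mexp ((a + b) *\<^sub>R X) $ i $ j" for i j
  proof -
    have cp: "(\<lambda>n. \<Sum>k\<le>n. al a i l k * al b l j (n - k)) sums (mexp (a *\<^sub>R X) $ i $ l * mexp (b *\<^sub>R X) $ l $ j)" for l
      using Cauchy_product_sums[OF al_norm[of a i l] al_norm[of b l j]]
        sums_unique[OF al_sums[of a i l]] sums_unique[OF al_sums[of b l j]] by simp
    have "(\<lambda>n. \<Sum>l\<in>UNIV. \<Sum>k\<le>n. al a i l k * al b l j (n - k)) sums
          (\<Sum>l\<in>UNIV. mexp (a *\<^sub>R X) $ i $ l * mexp (b *\<^sub>R X) $ l $ j)"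
      by (rule sums_sum) (rule cp)
    moreover have "(\<lambda>n. \<Sum>l\<in>UNIV. \<Sum>k\<le>n. al a i l k * al b l j (n - k)) = al (a + b) i j"
    proof
      fix n
      have "(\<Sum>l\<in>UNIV. \<Sum>k\<le>n. al a i l k * al b l j (n - k)) =
            (\<Sum>k\<le>n. of_real (a ^ k / fact k * (b ^ (n - k) / fact (n - k))) *
                 (\<Sum>l\<in>UNIV. P k $ i $ l * P (n - k) $ l $ j))"
        by (subst sum.swap) (simp add: al_def sum_distrib_left sum_divide_distrib mult_ac)
      also have "\<dots> = (\<Sum>k\<le>n. of_real (a ^ k * b ^ (n - k) / (fact k * fact (n - k))) * P n $ i $ j)"
      proof (intro sum.cong refl)
        fix k assume "k \<in> {..n}"
        then have "(\<Sum>l\<in>UNIV. P k $ i $ l * P (n - k) $ l $ j) = P n $ i $ j"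
          using mpow_add[of X k "n - k"] by (simp add: P_def matrix_matrix_mult_def)
        then show "of_real (a ^ k / fact k * (b ^ (n - k) / fact (n - k))) * (\<Sum>l\<in>UNIV. P k $ i $ l * P (n - k) $ l $ j)
            = of_real (a ^ k * b ^ (n - k) / (fact k * fact (n - k))) * P n $ i $ j"
          by simp
      qed
      also have "\<dots> = of_real (\<Sum>k\<le>n. a ^ k * b ^ (n - k) / (fact k * fact (n - k))) * P n $ i $ j"
        by (simp add: sum_distrib_right)
      also have "\<dots> = al (a + b) i j n"
        by (simp add: binom_real al_def)
      finally show "(\<Sum>l\<in>UNIV. \<Sum>k\<le>n. al a i l k * al b l j (n - k)) = al (a + b) i j n" .
    qed
    ultimately have "al (a + b) i j sums (\<Sum>l\<in>UNIV. mexp (a *\<^sub>R X) $ i $ l * mexp (b *\<^sub>R X) $ l $ j)"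
      by simp
    then show ?thesis
      using al_sums[of "a + b" i j] sums_unique2 by (fastforce simp: matrix_matrix_mult_def)
  qed
  then show ?thesis by (simp add: vec_eq_iff)
qed



section \<open>Gibbs state powers\<close>

lemma gp_arg: "- ((r * \<beta>) *\<^sub>R H) = r *\<^sub>R (- (\<beta> *\<^sub>R (H::'d::finite cmat)))"
  by simp

locale gb =
  fixes \<beta> :: real and H :: "'d::finite cmat"
  assumes herm: "hermitian H"
begin

definition X0 :: "'d cmat" where "X0 = - (\<beta> *\<^sub>R H)"
definition G :: "real \<Rightarrow> 'd cmat" where "G r = mexp (r *\<^sub>R X0)"

lemma G_mult: "G a ** G b = G (a + b)"
  by (simp add: G_def mexp_add_scaled)

lemma G_0: "G 0 = mat 1"
  by (simp add: G_def mexp_zero)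

lemma adj_X0: "adj X0 = X0"
  using herm by (simp add: X0_def hermitian_def adj_minus adj_scaleR)

lemma G_herm: "adj (G r) = G r"
  by (simp add: G_def mexp_adj adj_scaleR adj_X0)

lemma G_inv: "G r ** G (- r) = mat 1"
  by (simp add: G_mult G_0)

lemma G_nonzero: "G r \<noteq> 0"
  using G_inv[of r] mat1_nonzero by force

lemma partZ_G: "partZ \<beta> H = Re (trace (G 1))"
  by (simp add: partZ_def G_def X0_def)

lemma trace_G_sq: "trace (G r) = trace (adj (G (r/2)) ** G (r/2))"
  by (simp add: G_herm G_mult)

lemma Z_pos: "partZ \<beta> H > 0"
  unfolding partZ_G trace_G_sq using frob_pos[OF G_nonzero] by simp

lemma trace_G1: "trace (G 1) = of_real (partZ \<beta> H)"
  unfolding partZ_G trace_G_sq using frob_Im by (simp add: complex_eq_iff)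

abbreviation Z where "Z \<equiv> partZ \<beta> H"
abbreviation gp where "gp \<equiv> gibbs_pow \<beta> H"

lemma gp_G: "gp r = (1 / Z powr r) *\<^sub>R G r"
  by (simp add: gibbs_pow_def G_def X0_def)

lemma gp_mult: "gp a ** gp b = gp (a + b)"
  using Z_pos by (simp add: gp_G scaleR_mult_left scaleR_mult_right G_mult powr_add)

lemma gp_0: "gp 0 = mat 1"
  using Z_pos by (simp add: gp_G G_0)

lemma gp_herm: "adj (gp r) = gp r"
  by (simp add: gp_G adj_scaleR G_herm)

lemma gp_inv: "gp r ** gp (- r) = mat 1"
  by (simp add: gp_mult gp_0)

lemma gp_inv': "gp (- r) ** gp r = mat 1"
  by (simp add: gp_mult gp_0)

lemma gibbs_gp: "gibbs \<beta> H = gp 1"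
  using Z_pos by (simp add: gp_G gibbs_def G_def X0_def)

lemma trace_gibbs: "trace (gibbs \<beta> H) = 1"
  using Z_pos by (simp add: gibbs_def trace_scaleR trace_G1[unfolded G_def X0_def, simplified])

lemma gp_sq: "gp r = adj (gp (r/2)) ** gp (r/2)"
  by (simp add: gp_herm gp_mult)

lemma gibbs_herm: "adj (gibbs \<beta> H) = gibbs \<beta> H"
  by (simp add: gibbs_gp gp_herm)

end



section \<open>The KMS inner product\<close>

context gb
begin

abbreviation ip where "ip s \<equiv> sip \<beta> H s"

lemma sip_def': "ip s A B = trace (adj A ** gp (1 - s) ** B ** gp s)"
  by (simp add: sip_def)

lemma sip_add_right: "ip s A (B + C) = ip s A B + ip s A C"
  by (simp add: sip_def matrix_add_ldistrib add_mult_left trace_add)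
lemma sip_add_left: "ip s (A + B) C = ip s A C + ip s B C"
  by (simp add: sip_def adj_add add_mult_left trace_add)
lemma sip_diff_right: "ip s A (B - C) = ip s A B - ip s A C"
  by (simp add: sip_def diff_mult_right diff_mult_left trace_sub)
lemma sip_diff_left: "ip s (A - B) C = ip s A C - ip s B C"
  by (simp add: sip_def adj_diff diff_mult_left trace_sub)
lemma sip_scaleR_right: "ip s A (r *\<^sub>R B) = of_real r * ip s A B"
  by (simp add: sip_def scaleR_mult_left scaleR_mult_right trace_scaleR)
lemma sip_scaleR_left: "ip s (r *\<^sub>R A) B = of_real r * ip s A B"
  by (simp add: sip_def adj_scaleR scaleR_mult_left trace_scaleR)
lemma sip_cscale_right: "ip s A (cscale c B) = c * ip s A B"
  by (simp add: sip_def cscale_mult_left cscale_mult_right trace_cscale)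
lemma sip_cscale_left: "ip s (cscale c A) B = cnj c * ip s A B"
  by (simp add: sip_def adj_cscale cscale_mult_left trace_cscale)
lemma sip_zero_right[simp]: "ip s A 0 = 0"
  by (simp add: sip_def trace_def)
lemma sip_zero_left[simp]: "ip s 0 A = 0"
  by (simp add: sip_def trace_def)
lemma sip_minus_right: "ip s A (- B) = - ip s A B"
  by (simp add: sip_def minus_mult_left minus_mult_right trace_minus)
lemma sip_minus_left: "ip s (- A) B = - ip s A B"
  by (simp add: sip_def adj_minus minus_mult_left trace_minus)

lemma sip_conj: "ip s B A = cnj (ip s A B)"
proof -
  have "cnj (ip s A B) = trace (adj (adj A ** gp (1 - s) ** B ** gp s))"
    by (simp add: sip_def trace_adj)
  also have "\<dots> = trace (gp s ** (adj B ** gp (1 - s) ** A))"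
    by (simp add: adj_mult gp_herm matrix_mul_assoc)
  also have "\<dots> = ip s B A"
    by (simp add: sip_def trace_mul_sym[of "gp s"])
  finally show ?thesis by simp
qed

definition sq :: "real \<Rightarrow> 'd cmat \<Rightarrow> 'd cmat" where
  "sq s A = gp ((1 - s) / 2) ** A ** gp (s / 2)"

lemma sip_self: "ip s A A = trace (adj (sq s A) ** sq s A)"
proof -
  let ?S = "gp ((1 - s) / 2)" and ?T = "gp (s / 2)"
  have "ip s A A = trace (adj A ** (?S ** ?S) ** A ** (?T ** ?T))"
    by (simp add: sip_def gp_mult)
  also have "\<dots> = trace ((adj A ** ?S ** ?S ** A ** ?T) ** ?T)"
    by (simp add: matrix_mul_assoc)
  also have "\<dots> = trace (?T ** (adj A ** ?S ** ?S ** A ** ?T))"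
    by (rule trace_mul_sym)
  also have "\<dots> = trace (adj (sq s A) ** sq s A)"
    by (simp add: sq_def adj_mult gp_herm matrix_mul_assoc)
  finally show ?thesis .
qed

lemma gp_cancel_right: "X ** gp r ** gp (- r) = X"
  by (metis matrix_mul_assoc matrix_mul_rid gp_inv)

lemma gp_cancel_left: "gp (- r) ** (gp r ** X) = X"
  by (metis matrix_mul_assoc matrix_mul_lid gp_inv')

lemma sq_zero: "sq s A = 0 \<Longrightarrow> A = 0"
proof -
  assume "sq s A = 0"
  have "A = gp (- ((1 - s) / 2)) ** (sq s A ** gp (- (s / 2)))"
    unfolding sq_def gp_cancel_right gp_cancel_left ..
  then show "A = 0" using \<open>sq s A = 0\<close> by simp
qed

lemma sip_self_real: "ip s A A = of_real (Re (ip s A A))"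
  using frob_Im[of "sq s A"] by (simp add: sip_self complex_eq_iff)

lemma sip_self_nonneg: "0 \<le> Re (ip s A A)"
  by (simp add: sip_self frob_nonneg)

lemma sip_self_pos: "A \<noteq> 0 \<Longrightarrow> 0 < Re (ip s A A)"
  by (simp add: sip_self frob_pos sq_zero) (metis frob_pos sq_zero)

lemma sip_self_zero: "ip s A A = 0 \<longleftrightarrow> A = 0"
  by (metis sip_self_pos sip_zero_left order_less_irrefl zero_complex.sel(1))

lemma sip_one_right: "ip s X (mat 1) = trace (adj X ** gibbs \<beta> H)"
  by (simp add: sip_def gibbs_gp flip: matrix_mul_assoc) (simp add: gp_mult)

lemma sip_one_left: "ip s (mat 1) X = trace (X ** gibbs \<beta> H)"
proof -
  have "ip s (mat 1) X = trace ((gp (1 - s) ** X) ** gp s)" by (simp add: sip_def)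
  also have "\<dots> = trace (gp s ** (gp (1 - s) ** X))"
    by (rule trace_mul_sym)
  also have "\<dots> = trace (X ** (gp s ** gp (1 - s)))"
    by (simp add: matrix_mul_assoc trace_mul_sym[of _ X])
  finally show ?thesis by (simp add: gp_mult gibbs_gp)
qed

lemma Re_sip_sym: "Re (ip s B A) = Re (ip s A B)"
  by (simp add: sip_conj[of s B A])

lemma quad_cs:
  fixes a b c :: real
  assumes "\<And>t. 0 \<le> a + 2 * t * c + t\<^sup>2 * b" "0 \<le> b"
  shows "c\<^sup>2 \<le> a * b"
proof (cases "b = 0")
  case True
  show ?thesis
  proof (rule ccontr)
    assume "\<not> ?thesis"
    then have "c \<noteq> 0" using True by simp
    have "2 * (- (a + 1) / (2 * c)) * c = - (a + 1)" using \<open>c \<noteq> 0\<close> by simp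
    moreover have "0 \<le> a + 2 * (- (a + 1) / (2 * c)) * c" using assms(1)[of "- (a + 1) / (2 * c)"] True by simp
    ultimately show False by linarith
  qed
next
  case False
  then have bp: "b > 0" using assms(2) by simp
  have e1: "(- c / b)\<^sup>2 * b = c\<^sup>2 / b" using bp by (simp add: power2_eq_square)
  have e2: "2 * (- c / b) * c = - 2 * (c\<^sup>2 / b)" by (simp add: power2_eq_square)
  have "0 \<le> a + 2 * (- c / b) * c + (- c / b)\<^sup>2 * b" by (rule assms(1))
  then have "c\<^sup>2 / b \<le> a" unfolding e1 e2 by linarith
  then show ?thesis using bp by (simp add: divide_le_eq mult.commute)
qed

lemma sip_cs: "(Re (ip s A B))\<^sup>2 \<le> Re (ip s A A) * Re (ip s B B)"
proof (rule quad_cs[where c = "Re (ip s A B)"])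
  fix t :: real
  have "0 \<le> Re (ip s (A + t *\<^sub>R B) (A + t *\<^sub>R B))" by (rule sip_self_nonneg)
  also have "\<dots> = Re (ip s A A) + 2 * t * Re (ip s A B) + t\<^sup>2 * Re (ip s B B)"
    by (simp add: sip_add_left sip_add_right sip_scaleR_left sip_scaleR_right Re_sip_sym[of s B A]
         power2_eq_square algebra_simps)
  finally show "0 \<le> Re (ip s A A) + 2 * t * Re (ip s A B) + t\<^sup>2 * Re (ip s B B)" .
qed (simp add: sip_self_nonneg)

definition nr :: "real \<Rightarrow> 'd cmat \<Rightarrow> real" where "nr s A = sqrt (Re (ip s A A))"

lemma nr_nonneg: "0 \<le> nr s A" using sip_self_nonneg[of s A] by (simp add: nr_def)
lemma nr_sq: "(nr s A)\<^sup>2 = Re (ip s A A)"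
  unfolding nr_def by (rule real_sqrt_pow2[OF sip_self_nonneg])

lemma sip_cs_nr: "Re (ip s A B) \<le> nr s A * nr s B"
proof -
  have "(Re (ip s A B))\<^sup>2 \<le> (nr s A * nr s B)\<^sup>2"
    using sip_cs[of s A B] by (simp add: power_mult_distrib nr_sq)
  then have "\<bar>Re (ip s A B)\<bar> \<le> \<bar>nr s A * nr s B\<bar>"
    by (simp only: abs_le_square_iff)
  then show ?thesis using nr_nonneg[of s A] nr_nonneg[of s B] by simp
qed

end



section \<open>Kraus maps\<close>

lemma wkraus_adj_add: "wkraus_adj I w K (A + B) = wkraus_adj I w K A + wkraus_adj I w K B"
  by (simp add: wkraus_adj_def matrix_add_ldistrib add_mult_left sum.distrib scaleR_add_right)
lemma wkraus_adj_scaleR: "wkraus_adj I w K (r *\<^sub>R A) = r *\<^sub>R wkraus_adj I w K A"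
  by (simp add: wkraus_adj_def scaleR_mult_left scaleR_mult_right scaleR_sum_right mult.commute)
lemma cscale_sum: "cscale c (sum f S) = (\<Sum>x\<in>S. cscale c (f x))"
  by (simp add: vec_eq_iff sum_distrib_left)
lemma cscale_scaleR: "cscale c (r *\<^sub>R A) = r *\<^sub>R cscale c A"
  by (simp add: vec_eq_iff)
lemma wkraus_adj_cscale: "wkraus_adj I w K (cscale c A) = cscale c (wkraus_adj I w K A)"
  by (simp add: wkraus_adj_def cscale_mult_left cscale_mult_right cscale_sum cscale_scaleR)
lemma wkraus_add: "wkraus I w K (A + B) = wkraus I w K A + wkraus I w K B"
  by (simp add: wkraus_def matrix_add_ldistrib add_mult_left sum.distrib scaleR_add_right)
lemma wkraus_scaleR: "wkraus I w K (r *\<^sub>R A) = r *\<^sub>R wkraus I w K A"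
  by (simp add: wkraus_def scaleR_mult_left scaleR_mult_right scaleR_sum_right mult.commute)
lemma wkraus_cscale: "wkraus I w K (cscale c A) = cscale c (wkraus I w K A)"
  by (simp add: wkraus_def cscale_mult_left cscale_mult_right cscale_sum cscale_scaleR)
lemma wkraus_adj_linear: "linear (wkraus_adj I w K)"
  by (rule linearI) (simp_all add: wkraus_adj_add wkraus_adj_scaleR)
lemma wkraus_diff: "wkraus I w K (A - B) = wkraus I w K A - wkraus I w K B"
  using wkraus_add[of I w K B "A - B"] by simp
lemma wkraus_adj_diff: "wkraus_adj I w K (A - B) = wkraus_adj I w K A - wkraus_adj I w K B"
  using wkraus_adj_add[of I w K B "A - B"] by simp

lemma wkraus_adjoint: "adj (wkraus I w K X) = wkraus I w K (adj X)"
  by (simp add: wkraus_def adj_sum adj_scaleR adj_mult matrix_mul_assoc)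

lemma adj_wkraus_adj: "adj (wkraus_adj I w K X) = wkraus_adj I w K (adj X)"
  by (simp add: wkraus_adj_def adj_sum adj_scaleR adj_mult matrix_mul_assoc)

lemma wkraus_duality:
  "trace (adj A ** wkraus I w K Y) = trace (adj (wkraus_adj I w K A) ** Y)"
proof -
  have "trace (adj A ** wkraus I w K Y) = (\<Sum>u\<in>I. of_real (w u) * trace (adj A ** K u ** Y ** adj (K u)))"
    by (simp add: wkraus_def sum_mult_right scaleR_mult_right trace_sum trace_scaleR matrix_mul_assoc)
  also have "\<dots> = (\<Sum>u\<in>I. of_real (w u) * trace (adj (K u) ** adj A ** K u ** Y))"
  proof (intro sum.cong refl)
    fix u
    have "trace ((adj A ** K u ** Y) ** adj (K u)) = trace (adj (K u) ** (adj A ** K u ** Y))"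
      by (rule trace_mul_sym)
    then show "of_real (w u) * trace (adj A ** K u ** Y ** adj (K u)) =
               of_real (w u) * trace (adj (K u) ** adj A ** K u ** Y)"
      by (simp add: matrix_mul_assoc)
  qed
  also have "\<dots> = trace (adj (wkraus_adj I w K A) ** Y)"
    by (simp add: wkraus_adj_def adj_sum adj_scaleR adj_mult sum_mult_left scaleR_mult_left trace_sum trace_scaleR
        matrix_mul_assoc)
  finally show ?thesis .
qed

lemma kraus_adj_one: "is_channel I K \<Longrightarrow> kraus_adj I K (mat 1) = mat 1"
  by (simp add: is_channel_def kraus_adj_def wkraus_adj_def)

lemma kraus_trace: "is_channel I K \<Longrightarrow> trace (kraus I K Y) = trace Y"
  using wkraus_duality[of "mat 1" I "\<lambda>_. 1" K Y]
  by (simp add: kraus_def kraus_adj_one[unfolded kraus_adj_def])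

lemma trace_wkraus: "trace (wkraus I w K Y) = trace (adj (wkraus_adj I w K (mat 1)) ** Y)"
  using wkraus_duality[of "mat 1" I w K Y] by simp

context gb
begin

definition Gam :: "real \<Rightarrow> 'd cmat \<Rightarrow> 'd cmat" where
  "Gam s X = gp (1 - s) ** X ** gp s"

lemma sip_Gam: "ip s A B = trace (adj A ** Gam s B)"
  by (simp add: sip_def Gam_def matrix_mul_assoc)

lemma Gam_zero: "Gam s X = 0 \<Longrightarrow> X = 0"
proof -
  assume a: "Gam s X = 0"
  have "X = gp (- (1 - s)) ** (Gam s X ** gp (- s))"
    unfolding Gam_def gp_cancel_right gp_cancel_left ..
  then show "X = 0" using a by simp
qed

lemma Gam_one: "Gam s (mat 1) = gibbs \<beta> H"
  by (simp add: Gam_def gp_mult gibbs_gp)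

lemma Gam_cscale: "Gam s (cscale c X) = cscale c (Gam s X)"
  by (simp add: Gam_def cscale_mult_left cscale_mult_right)

lemma db_intertwine:
  assumes "detailed_balance \<beta> H s (wkraus_adj I w K)"
  shows "Gam s (wkraus_adj I w K X) = wkraus I w K (Gam s X)"
proof -
  have "trace (adj A ** (Gam s (wkraus_adj I w K X) - wkraus I w K (Gam s X))) = 0" for A
  proof -
    have "trace (adj A ** Gam s (wkraus_adj I w K X)) = ip s A (wkraus_adj I w K X)"
      by (simp add: sip_Gam)
    also have "\<dots> = ip s (wkraus_adj I w K A) X"
      using assms by (simp add: detailed_balance_def)
    also have "\<dots> = trace (adj A ** wkraus I w K (Gam s X))"
      by (simp add: sip_Gam wkraus_duality)
    finally show ?thesis by (simp add: diff_mult_right trace_sub)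
  qed
  then show ?thesis using trace_adj_eq_zero by (metis eq_iff_diff_eq_0)
qed

lemma db_fixed:
  assumes "detailed_balance \<beta> H s (kraus_adj I K)" "is_channel I K"
  shows "kraus I K (gibbs \<beta> H) = gibbs \<beta> H"
  using db_intertwine[OF assms(1)[unfolded kraus_adj_def], of "mat 1"]
    kraus_adj_one[OF assms(2)]
  by (simp add: kraus_def kraus_adj_def Gam_one)

end



section \<open>Variational characterisation\<close>

lemma lin_quad_zero:
  fixes a c :: real
  assumes "\<And>t. 2 * t * a + t\<^sup>2 * c \<le> 0"
  shows "a = 0"
proof (rule ccontr)
  assume "a \<noteq> 0"
  define k where "k = \<bar>c\<bar> + 1"
  have kp: "k > 0" by (simp add: k_def)
  have ck: "c / k > -1" using kp by (simp add: k_def field_simps abs_if)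
  have "2 * (a / k) * a + (a / k)\<^sup>2 * c = (a\<^sup>2 / k) * (2 + c / k)"
    using kp by (simp add: field_simps power2_eq_square)
  moreover have "(a\<^sup>2 / k) * (2 + c / k) > 0"
    using kp ck \<open>a \<noteq> 0\<close> by (intro mult_pos_pos) auto
  ultimately show False using assms[of "a / k"] by linarith
qed

lemma cont_entries: "continuous_on S f \<Longrightarrow> continuous_on S (\<lambda>x. (f x :: 'd::finite cmat) $ k $ i)"
  by (intro continuous_on_component)

context gb
begin

lemma Gam_linear: "linear (Gam s)"
  by (rule linearI) (simp_all add: Gam_def matrix_add_ldistrib add_mult_left scaleR_mult_left scaleR_mult_right)

lemma sip_expand: "ip s A B = (\<Sum>i\<in>UNIV. \<Sum>k\<in>UNIV. cnj (A $ k $ i) * Gam s B $ k $ i)"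
  by (simp add: sip_Gam trace_def matrix_matrix_mult_def)

lemma lin_cont: "linear (L :: 'd cmat \<Rightarrow> 'd cmat) \<Longrightarrow> continuous_on S L"
  by (rule linear_continuous_on) (simp add: linear_conv_bounded_linear)

lemma sip_cont:
  assumes "linear L"
  shows "continuous_on S (\<lambda>X. ip s X (L X))"
proof -
  have "linear (Gam s \<circ> L)" using assms Gam_linear by (rule linear_compose)
  then have c: "continuous_on S (\<lambda>X. Gam s (L X))" using lin_cont[of "Gam s \<circ> L"] by (simp add: o_def)
  show ?thesis unfolding sip_expand
    by (intro continuous_intros cont_entries c)
qed

lemma sip_cont_const: "continuous_on S (\<lambda>X. ip s X e)"
  unfolding sip_expand by (intro continuous_intros)

definition rq :: "real \<Rightarrow> ('d cmat \<Rightarrow> 'd cmat) \<Rightarrow> 'd cmat \<Rightarrow> real" where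
  "rq s T X = Re (ip s X (T X)) / Re (ip s X X)"

lemma rq_scale:
  assumes "linear T" "c \<noteq> 0"
  shows "rq s T (c *\<^sub>R X) = rq s T X"
  using assms by (simp add: rq_def linear_scale sip_scaleR_left sip_scaleR_right)

lemma var_max:
  fixes T :: "'d cmat \<Rightarrow> 'd cmat" and e :: "'d cmat" and \<mu> :: real
  assumes lin: "linear T"
    and sa: "\<And>A B. ip s A (T B) = ip s (T A) B"
    and Te: "T e = \<mu> *\<^sub>R e"
    and ne: "\<exists>X. X \<noteq> 0 \<and> ip s X e = 0"
  shows "\<exists>X0. X0 \<noteq> 0 \<and> ip s X0 e = 0 \<and> (\<forall>X. X \<noteq> 0 \<and> ip s X e = 0 \<longrightarrow> rq s T X \<le> rq s T X0)
              \<and> T X0 = rq s T X0 *\<^sub>R X0"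
proof -
  define Sph where "Sph = sphere (0::'d cmat) 1 \<inter> {X. ip s X e = 0}"
  have "closed {X. ip s X e = 0}"
    using closed_Collect_eq[of "\<lambda>X. ip s X e" "\<lambda>_. 0"] sip_cont_const by simp
  then have cpt: "compact Sph" unfolding Sph_def by (intro compact_Int_closed) auto
  from ne obtain X1 where X1: "X1 \<noteq> 0" "ip s X1 e = 0" by blast
  have inSph: "(1 / norm X) *\<^sub>R X \<in> Sph" if "X \<noteq> 0" "ip s X e = 0" for X
    using that by (simp add: Sph_def sip_scaleR_left)
  then have nemp: "Sph \<noteq> {}" using X1 by blast
  have Sph_nz: "X \<noteq> 0" if "X \<in> Sph" for X using that by (auto simp: Sph_def)
  have c1: "continuous_on Sph (\<lambda>X. ip s X (T X))" by (rule sip_cont[OF lin])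
  have c2: "continuous_on Sph (\<lambda>X. ip s X X)" using sip_cont[OF linear_id, of Sph s] by simp
  have cont: "continuous_on Sph (rq s T)"
    unfolding rq_def
  proof (rule continuous_on_divide)
    show "continuous_on Sph (\<lambda>X. Re (ip s X (T X)))" using c1 by (rule continuous_on_Re)
    show "continuous_on Sph (\<lambda>X. Re (ip s X X))" using c2 by (rule continuous_on_Re)
    show "\<forall>X\<in>Sph. Re (ip s X X) \<noteq> 0"
      using Sph_nz sip_self_pos by (metis less_irrefl)
  qed
  obtain X0 where X0: "X0 \<in> Sph" "\<And>Y. Y \<in> Sph \<Longrightarrow> rq s T Y \<le> rq s T X0"
    using continuous_attains_sup[OF cpt nemp cont] by blast
  have X0nz: "X0 \<noteq> 0" and X0e: "ip s X0 e = 0" using X0(1) by (auto simp: Sph_def)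
  have maxW: "rq s T X \<le> rq s T X0" if "X \<noteq> 0" "ip s X e = 0" for X
    using X0(2)[OF inSph[OF that]] rq_scale[OF lin, of "1 / norm X" s X] that by simp
  define lam where "lam = rq s T X0"
  have quadle: "Re (ip s Z (T Z)) \<le> lam * Re (ip s Z Z)" if "ip s Z e = 0" for Z
  proof (cases "Z = 0")
    case True
    then show ?thesis by simp
  next
    case False
    have pos: "0 < Re (ip s Z Z)" using sip_self_pos[OF False] .
    have "rq s T Z \<le> lam" using maxW[OF False that] by (simp add: lam_def)
    then show ?thesis using pos by (simp add: rq_def divide_le_eq)
  qed
  have lam0: "Re (ip s X0 (T X0)) = lam * Re (ip s X0 X0)"
    using sip_self_pos[OF X0nz, of s] by (simp add: lam_def rq_def)
  define D where "D = T X0 - lam *\<^sub>R X0"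
  have ReD: "Re (ip s Y D) = 0" if Y: "ip s Y e = 0" for Y
  proof -
    define DY where "DY = T Y - lam *\<^sub>R Y"
    have "2 * t * Re (ip s Y D) + t\<^sup>2 * Re (ip s Y DY) \<le> 0" for t
    proof -
      let ?Z = "X0 + t *\<^sub>R Y"
      have Ze: "ip s ?Z e = 0" using X0e Y by (simp add: sip_add_left sip_scaleR_left)
      have "T ?Z - lam *\<^sub>R ?Z = D + t *\<^sub>R DY"
        using lin by (simp add: D_def DY_def linear_add linear_scale algebra_simps)
      then have "Re (ip s ?Z (T ?Z)) - lam * Re (ip s ?Z ?Z) = Re (ip s ?Z (D + t *\<^sub>R DY))"
        by (metis sip_diff_right sip_scaleR_right Re_complex_of_real minus_complex.sel(1) times_complex.sel(1)
            mult_zero_left diff_zero Im_complex_of_real mult_zero_right)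
      also have "\<dots> = Re (ip s X0 D) + t * Re (ip s X0 DY) + t * Re (ip s Y D) + t\<^sup>2 * Re (ip s Y DY)"
        by (simp add: sip_add_left sip_add_right sip_scaleR_left sip_scaleR_right power2_eq_square algebra_simps)
      also have "Re (ip s X0 D) = 0"
        using lam0 by (simp add: D_def sip_diff_right sip_scaleR_right)
      also have "Re (ip s X0 DY) = Re (ip s Y D)"
      proof -
        have "Re (ip s X0 DY) = Re (ip s X0 (T Y)) - lam * Re (ip s X0 Y)"
          by (simp add: DY_def sip_diff_right sip_scaleR_right)
        also have "\<dots> = Re (ip s (T X0) Y) - lam * Re (ip s X0 Y)" by (simp add: sa)
        also have "\<dots> = Re (ip s D Y)"
          by (simp add: D_def sip_diff_left sip_scaleR_left)
        finally show ?thesis by (simp add: Re_sip_sym)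
      qed
      finally have "Re (ip s ?Z (T ?Z)) - lam * Re (ip s ?Z ?Z) = 2 * t * Re (ip s Y D) + t\<^sup>2 * Re (ip s Y DY)"
        by simp
      moreover have "Re (ip s ?Z (T ?Z)) - lam * Re (ip s ?Z ?Z) \<le> 0" using quadle[OF Ze] by simp
      ultimately show ?thesis by simp
    qed
    then show ?thesis by (rule lin_quad_zero)
  qed
  have ipD: "ip s Y D = 0" if Y: "ip s Y e = 0" for Y
  proof -
    have "ip s (cscale \<i> Y) e = 0" using Y by (simp add: sip_cscale_left)
    then have "Re (ip s (cscale \<i> Y) D) = 0" by (rule ReD)
    then have "Im (ip s Y D) = 0" by (simp add: sip_cscale_left)
    moreover have "Re (ip s Y D) = 0" using ReD[OF Y] .
    ultimately show ?thesis by (simp add: complex_eq_iff)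
  qed
  have "ip s e D = 0"
  proof -
    have e0: "ip s e X0 = 0" using X0e sip_conj[of s e X0] by simp
    have "ip s e D = ip s (T e) X0 - of_real lam * ip s e X0"
      by (simp add: D_def sip_diff_right sip_scaleR_right sa)
    also have "\<dots> = 0" using e0 by (simp add: Te sip_scaleR_left)
    finally show ?thesis .
  qed
  then have "ip s D e = 0" using sip_conj[of s D e] by simp
  then have "ip s D D = 0" by (rule ipD)
  then have "D = 0" by (simp add: sip_self_zero)
  then have "T X0 = lam *\<^sub>R X0" by (simp add: D_def)
  then show ?thesis using X0nz X0e maxW unfolding lam_def by blast
qed

end



lemma scaleR_cscale_eq: "c *\<^sub>R Y = cscale (of_real c) (Y::'d::finite cmat)"
  by (simp only: vec_eq_iff vector_scaleR_component cscale_nth, simp add: scaleR_conv_of_real)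

context gb
begin

lemma sa_neg: "(\<And>A B. ip s A (T B) = ip s (T A) B) \<Longrightarrow> ip s A (- T B) = ip s (- T A) B"
  by (simp add: sip_minus_right sip_minus_left)

lemma psd_from_eig:
  assumes lin: "linear T" and sa: "\<And>A B. ip s A (T B) = ip s (T A) B"
    and eig: "\<And>c X. X \<noteq> 0 \<Longrightarrow> T X = c *\<^sub>R X \<Longrightarrow> 0 \<le> c"
  shows "0 \<le> Re (ip s X (T X))"
proof -
  let ?T = "\<lambda>X. - T X"
  have lin': "linear ?T" using lin by (rule linear_compose_neg)
  have sa': "\<And>A B. ip s A (?T B) = ip s (?T A) B" using sa by (simp add: sip_minus_right sip_minus_left)
  have T0: "?T 0 = 0 *\<^sub>R 0" using lin by (simp add: linear_0)
  have ne: "\<exists>X. X \<noteq> 0 \<and> ip s X 0 = 0" using mat1_nonzero by auto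
  obtain X0 where X0: "X0 \<noteq> 0" "\<forall>X. X \<noteq> 0 \<and> ip s X 0 = 0 \<longrightarrow> rq s ?T X \<le> rq s ?T X0"
      "?T X0 = rq s ?T X0 *\<^sub>R X0"
    using var_max[OF lin' sa' T0 ne] by blast
  have "T X0 = (- rq s ?T X0) *\<^sub>R X0" using X0(3) by (metis minus_minus scaleR_minus_left)
  then have "0 \<le> - rq s ?T X0" using eig X0(1) by blast
  show ?thesis
  proof (cases "X = 0")
    case True then show ?thesis using lin by (simp add: linear_0)
  next
    case False
    then have "rq s ?T X \<le> 0" using X0(2) \<open>0 \<le> - rq s ?T X0\<close> by fastforce
    then have "- Re (ip s X (T X)) / Re (ip s X X) \<le> 0" by (simp add: rq_def sip_minus_right)
    moreover have "0 < Re (ip s X X)" using sip_self_pos[OF False] .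
    ultimately show ?thesis by (simp add: zero_le_divide_iff)
  qed
qed

lemma contr_from_eig:
  assumes lin: "linear T" and sa: "\<And>A B. ip s A (T B) = ip s (T A) B"
    and eig: "\<And>c X. X \<noteq> 0 \<Longrightarrow> T X = c *\<^sub>R X \<Longrightarrow> \<bar>c\<bar> \<le> 1"
  shows "Re (ip s (T X) (T X)) \<le> Re (ip s X X)"
proof -
  let ?S = "\<lambda>X. T (T X)"
  have lin': "linear ?S" using linear_compose[OF lin lin] by (simp add: o_def)
  have sa': "\<And>A B. ip s A (?S B) = ip s (?S A) B" using sa by simp
  have T0: "T 0 = 0" using lin by (simp add: linear_0)
  then have S0: "?S 0 = 0 *\<^sub>R 0" by simp
  have ne: "\<exists>X. X \<noteq> 0 \<and> ip s X 0 = 0" using mat1_nonzero by auto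
  obtain X0 where X0: "X0 \<noteq> 0" "\<forall>X. X \<noteq> 0 \<and> ip s X 0 = 0 \<longrightarrow> rq s ?S X \<le> rq s ?S X0"
      "?S X0 = rq s ?S X0 *\<^sub>R X0"
    using var_max[OF lin' sa' S0 ne] by blast
  define nu where "nu = rq s ?S X0"
  have nu_nonneg: "0 \<le> nu"
    unfolding nu_def rq_def using sa[of X0 "T X0"] sip_self_nonneg[of s "T X0"] sip_self_nonneg[of s X0]
    by simp
  have nu_le: "nu \<le> 1"
  proof (rule ccontr)
    assume "\<not> nu \<le> 1"
    define a where "a = sqrt nu"
    have a1: "a > 1" using \<open>\<not> nu \<le> 1\<close> by (simp add: a_def)
    have aa: "a * a = nu" using nu_nonneg by (simp add: a_def)
    define Y where "Y = T X0 + a *\<^sub>R X0"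
    show False
    proof (cases "Y = 0")
      case True
      then have "T X0 = (- a) *\<^sub>R X0" by (simp add: Y_def eq_neg_iff_add_eq_0)
      then have "\<bar>- a\<bar> \<le> 1" using eig X0(1) by blast
      then show False using a1 by simp
    next
      case False
      have "T Y = nu *\<^sub>R X0 + a *\<^sub>R T X0"
        using X0(3) lin by (simp add: Y_def linear_add linear_scale nu_def)
      also have "\<dots> = a *\<^sub>R Y" by (simp add: Y_def scaleR_add_right flip: aa)
      finally have "\<bar>a\<bar> \<le> 1" using eig False by blast
      then show False using a1 by simp
    qed
  qed
  show ?thesis
  proof (cases "X = 0")
    case True then show ?thesis using T0 by simp
  next
    case False
    have "rq s ?S X \<le> nu" using X0(2) False by (simp add: nu_def)
    then have "Re (ip s X (?S X)) \<le> nu * Re (ip s X X)"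
      using sip_self_pos[OF False, of s] by (simp add: rq_def divide_le_eq)
    also have "\<dots> \<le> Re (ip s X X)" using nu_le sip_self_nonneg[of s X] nu_nonneg
      by (intro mult_left_le_one_le)
    finally show ?thesis by (simp add: sa)
  qed
qed

lemma contr_W:
  assumes sa: "\<And>A B. ip s A (T B) = ip s (T A) B" and lin: "linear T"
    and psd: "\<And>Z. 0 \<le> Re (ip s Z (T Z))"
    and inv: "\<And>Z. ip s Z e = 0 \<Longrightarrow> ip s (T Z) e = 0"
    and bound: "\<And>Z. ip s Z e = 0 \<Longrightarrow> Re (ip s Z (T Z)) \<le> lam * Re (ip s Z Z)"
    and lam0: "0 \<le> lam"
    and Xe: "ip s X e = 0"
  shows "Re (ip s (T X) (T X)) \<le> lam\<^sup>2 * Re (ip s X X)"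
proof -
  define n where "n = Re (ip s (T X) (T X))"
  have n0: "0 \<le> n" by (simp add: n_def sip_self_nonneg)
  have bsym: "Re (ip s Y (T Z)) = Re (ip s Z (T Y))" for Y Z
    by (metis sa Re_sip_sym)
  have cs: "(Re (ip s X (T (T X))))\<^sup>2 \<le> Re (ip s X (T X)) * Re (ip s (T X) (T (T X)))"
  proof (rule quad_cs)
    fix t :: real
    have "0 \<le> Re (ip s (X + t *\<^sub>R T X) (T (X + t *\<^sub>R T X)))" by (rule psd)
    also have "\<dots> = Re (ip s X (T X)) + 2 * t * Re (ip s X (T (T X))) + t\<^sup>2 * Re (ip s (T X) (T (T X)))"
      using lin bsym[of "T X" X]
      by (simp add: linear_add linear_scale sip_add_left sip_add_right sip_scaleR_left sip_scaleR_right
          power2_eq_square algebra_simps)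
    finally show "0 \<le> Re (ip s X (T X)) + 2 * t * Re (ip s X (T (T X))) + t\<^sup>2 * Re (ip s (T X) (T (T X)))" .
  qed (rule psd)
  have e1: "Re (ip s X (T (T X))) = n" by (simp add: n_def sa)
  have b1: "Re (ip s X (T X)) \<le> lam * Re (ip s X X)" using bound[OF Xe] .
  have b2: "Re (ip s (T X) (T (T X))) \<le> lam * n" using bound[OF inv[OF Xe]] by (simp add: n_def)
  have "n\<^sup>2 \<le> (lam * Re (ip s X X)) * (lam * n)"
    using cs unfolding e1
    by (rule order_trans) (intro mult_mono b1 b2 psd, simp add: lam0 sip_self_nonneg)
  moreover have "(lam * Re (ip s X X)) * (lam * n) = n * (lam\<^sup>2 * Re (ip s X X))"
    by (simp add: power2_eq_square)
  ultimately have le: "n * n \<le> n * (lam\<^sup>2 * Re (ip s X X))" by (simp add: power2_eq_square)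
  show ?thesis
  proof (cases "n = 0")
    case True
    then show ?thesis using lam0 sip_self_nonneg[of s X] by (simp add: n_def)
  next
    case False
    then have "0 < n" using n0 by simp
    then have "n \<le> lam\<^sup>2 * Re (ip s X X)" using le by simp
    then show ?thesis by (simp add: n_def)
  qed
qed

end



section \<open>Kadison--Schwarz and eigenvalue bound for channels\<close>

lemma kraus_adj_expand: "kraus_adj I K Z = (\<Sum>u\<in>I. adj (K u) ** Z ** K u)"
  by (simp add: kraus_adj_def wkraus_adj_def)

lemma ks_identity:
  fixes X :: "'d::finite cmat" and K :: "'a \<Rightarrow> 'd cmat" and I :: "'a set"
  assumes ch: "(\<Sum>u\<in>I. adj (K u) ** K u) = mat 1"
  defines "Y \<equiv> kraus_adj I K X"
  shows "(\<Sum>u\<in>I. adj (X ** K u - K u ** Y) ** (X ** K u - K u ** Y))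
          = kraus_adj I K (adj X ** X) - adj Y ** Y"
proof -
  have tm: "adj (X ** K u - K u ** Y) ** (X ** K u - K u ** Y) =
      adj (K u) ** (adj X ** X) ** K u - (adj (K u) ** adj X ** K u) ** Y
      - adj Y ** (adj (K u) ** X ** K u) + adj Y ** (adj (K u) ** K u) ** Y" for u
    by (simp add: adj_diff adj_mult diff_mult_left diff_mult_right matrix_mul_assoc algebra_simps)
  have s1: "(\<Sum>u\<in>I. adj (K u) ** adj X ** K u) = adj Y"
    by (simp add: Y_def kraus_adj_expand adj_sum adj_mult matrix_mul_assoc)
  have s2: "(\<Sum>u\<in>I. adj (K u) ** X ** K u) = Y"
    by (simp add: Y_def kraus_adj_expand)
  have "(\<Sum>u\<in>I. adj (X ** K u - K u ** Y) ** (X ** K u - K u ** Y)) =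
      (\<Sum>u\<in>I. adj (K u) ** (adj X ** X) ** K u) - (\<Sum>u\<in>I. adj (K u) ** adj X ** K u) ** Y
      - adj Y ** (\<Sum>u\<in>I. adj (K u) ** X ** K u) + adj Y ** (\<Sum>u\<in>I. adj (K u) ** K u) ** Y"
    unfolding tm by (simp add: sum.distrib sum_subtractf sum_mult_left sum_mult_right)
  also have "\<dots> = kraus_adj I K (adj X ** X) - adj Y ** Y"
    by (simp add: s1 s2 ch kraus_adj_expand)
  finally show ?thesis .
qed

context gb
begin

lemma trace_rho_sq: "trace (adj V ** V ** gibbs \<beta> H) = trace (adj (V ** gp (1/2)) ** (V ** gp (1/2)))"
proof -
  have "trace (adj V ** V ** gibbs \<beta> H) = trace ((adj V ** V ** gp (1/2)) ** gp (1/2))"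
    by (simp add: gibbs_gp gp_mult flip: matrix_mul_assoc)
  also have "\<dots> = trace (gp (1/2) ** (adj V ** V ** gp (1/2)))" by (rule trace_mul_sym)
  also have "\<dots> = trace (adj (V ** gp (1/2)) ** (V ** gp (1/2)))"
    by (simp add: adj_mult gp_herm matrix_mul_assoc)
  finally show ?thesis .
qed

lemma trace_rho_nonneg: "0 \<le> Re (trace (adj V ** V ** gibbs \<beta> H))"
  by (simp add: trace_rho_sq frob_nonneg)

lemma trace_rho_pos: "V \<noteq> 0 \<Longrightarrow> 0 < Re (trace (adj V ** V ** gibbs \<beta> H))"
proof -
  assume "V \<noteq> 0"
  have "V ** gp (1/2) \<noteq> 0"
  proof
    assume "V ** gp (1/2) = 0"
    then have "V ** gp (1/2) ** gp (- (1/2)) = 0" by simp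
    then show False using \<open>V \<noteq> 0\<close> by (simp only: gp_cancel_right)
  qed
  then show ?thesis by (simp add: trace_rho_sq frob_pos)
qed

lemma trace_fixed_dual:
  assumes "kraus I K (gibbs \<beta> H) = gibbs \<beta> H"
  shows "trace (kraus_adj I K W ** gibbs \<beta> H) = trace (W ** gibbs \<beta> H)"
  using wkraus_duality[of "adj W" I "\<lambda>_. 1" K "gibbs \<beta> H"] assms
  by (simp add: kraus_def kraus_adj_def adj_wkraus_adj)

lemma channel_eig_bound:
  assumes ch: "is_channel I K" and fx: "kraus I K (gibbs \<beta> H) = gibbs \<beta> H"
    and eig: "kraus_adj I K X = c *\<^sub>R X" and nz: "X \<noteq> 0"
  shows "\<bar>c\<bar> \<le> 1"
proof -
  let ?Y = "kraus_adj I K X"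
  let ?r = "gibbs \<beta> H"
  have id: "(\<Sum>u\<in>I. adj (X ** K u - K u ** ?Y) ** (X ** K u - K u ** ?Y))
          = kraus_adj I K (adj X ** X) - adj ?Y ** ?Y"
    using ch by (intro ks_identity) (simp add: is_channel_def)
  have "0 \<le> (\<Sum>u\<in>I. Re (trace (adj (X ** K u - K u ** ?Y) ** (X ** K u - K u ** ?Y) ** ?r)))"
    by (intro sum_nonneg trace_rho_nonneg)
  also have "\<dots> = Re (trace ((kraus_adj I K (adj X ** X) - adj ?Y ** ?Y) ** ?r))"
    by (simp add: id[symmetric] sum_mult_left trace_sum)
  also have "\<dots> = Re (trace (adj X ** X ** ?r)) - c\<^sup>2 * Re (trace (adj X ** X ** ?r))"
    by (simp add: diff_mult_left trace_sub trace_fixed_dual[OF fx] eig adj_scaleR scaleR_mult_left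
        scaleR_mult_right trace_scaleR power2_eq_square)
  finally have "c\<^sup>2 * Re (trace (adj X ** X ** ?r)) \<le> 1 * Re (trace (adj X ** X ** ?r))" by simp
  then have "c\<^sup>2 \<le> 1" using trace_rho_pos[OF nz] by (simp only: mult_le_cancel_right_pos)
  then show ?thesis by (simp add: abs_square_le_1)
qed

end



section \<open>Quadratic forms and perturbed densities\<close>

definition qf :: "'d::finite cmat \<Rightarrow> complex^'d \<Rightarrow> complex" where
  "qf A v = (\<Sum>i\<in>UNIV. \<Sum>j\<in>UNIV. cnj (v $ i) * A $ i $ j * v $ j)"

lemma psd_qf: "psd A \<longleftrightarrow> (\<forall>v. Im (qf A v) = 0 \<and> 0 \<le> Re (qf A v))"
  by (simp add: psd_def qf_def Let_def)

lemma qf_add: "qf (A + B) v = qf A v + qf B v"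
  by (simp add: qf_def distrib_left distrib_right sum.distrib)

lemma qf_scaleR: "qf (r *\<^sub>R A) v = of_real r * qf A v"
  by (simp only: qf_def vector_scaleR_component, simp add: sum_distrib_left scaleR_conv_of_real mult_ac)

lemma qf_vscale: "qf A (r *\<^sub>R v) = of_real (r\<^sup>2) * qf A v"
  by (simp only: qf_def vector_scaleR_component, simp add: sum_distrib_left scaleR_conv_of_real mult_ac power2_eq_square)

lemma qf_zero_vec: "qf A 0 = 0"
  by (simp add: qf_def)

lemma qf_cnj: "cnj (qf A v) = qf (adj A) v"
  unfolding qf_def by (simp add: mult_ac) (subst sum.swap, simp)

lemma qf_herm_Im: "adj A = A \<Longrightarrow> Im (qf A v) = 0"
  using qf_cnj[of A v] by (metis Reals_cnj_iff complex_is_Real_iff)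

lemma qf_gram: "qf (adj B ** B) v = (\<Sum>k\<in>UNIV. cnj ((B *v v) $ k) * (B *v v) $ k)"
  unfolding qf_def
  by (simp add: matrix_matrix_mult_def matrix_vector_mult_def sum_distrib_left sum_distrib_right mult_ac)
     (subst sum.swap, subst (2) sum.swap, simp add: sum_distrib_left mult_ac)

lemma qf_gram_Re: "Re (qf (adj B ** B) v) = (\<Sum>k\<in>UNIV. (cmod ((B *v v) $ k))\<^sup>2)"
  by (simp add: qf_gram complex_norm_square[symmetric] mult.commute[of "cnj _"])

lemma qf_gram_pos: "B *v v \<noteq> 0 \<Longrightarrow> 0 < Re (qf (adj B ** B) v)"
proof -
  assume "B *v v \<noteq> 0"
  then obtain k where "(B *v v) $ k \<noteq> 0" by (auto simp: vec_eq_iff)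
  then have "0 < (cmod ((B *v v) $ k))\<^sup>2" by simp
  also have "\<dots> \<le> (\<Sum>k\<in>UNIV. (cmod ((B *v v) $ k))\<^sup>2)"
    by (rule member_le_sum) auto
  finally show ?thesis by (simp add: qf_gram_Re)
qed

lemma qf_cont: "continuous_on S (qf A)"
  unfolding qf_def by (intro continuous_intros)

context gb
begin

lemma rho_qf_pos: "v \<noteq> 0 \<Longrightarrow> 0 < Re (qf (gibbs \<beta> H) v)"
proof -
  assume "v \<noteq> 0"
  have "gp (1/2) *v v \<noteq> 0"
  proof
    assume "gp (1/2) *v v = 0"
    then have "gp (- (1/2)) *v (gp (1/2) *v v) = 0" by simp
    then show False using \<open>v \<noteq> 0\<close> by (simp add: matrix_vector_mul_assoc gp_inv')
  qed
  moreover have "gibbs \<beta> H = adj (gp (1/2)) ** gp (1/2)"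
    using gp_sq[of 1] by (simp add: gibbs_gp)
  ultimately show ?thesis by (simp add: qf_gram_pos)
qed

lemma perturb_density:
  assumes herZ: "adj Zh = Zh" and trZ: "trace Zh = 0"
  shows "\<exists>\<epsilon>>0. density (gibbs \<beta> H + \<epsilon> *\<^sub>R Zh)"
proof -
  let ?r = "gibbs \<beta> H"
  let ?S = "sphere (0::complex^'d) 1"
  have cS: "compact ?S" by simp
  have neS: "?S \<noteq> {}" by simp
  obtain v0 where v0: "v0 \<in> ?S" "\<And>v. v \<in> ?S \<Longrightarrow> Re (qf ?r v0) \<le> Re (qf ?r v)"
    using continuous_attains_inf[OF cS neS, of "\<lambda>v. Re (qf ?r v)"]
    by (metis continuous_on_Re qf_cont)
  obtain v1 where v1: "v1 \<in> ?S" "\<And>v. v \<in> ?S \<Longrightarrow> cmod (qf Zh v) \<le> cmod (qf Zh v1)"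
    using continuous_attains_sup[OF cS neS, of "\<lambda>v. cmod (qf Zh v)"]
    by (metis continuous_on_norm qf_cont)
  define m where "m = Re (qf ?r v0)"
  define C where "C = cmod (qf Zh v1)"
  have mpos: "0 < m" unfolding m_def using v0(1) by (intro rho_qf_pos) auto
  have C0: "0 \<le> C" by (simp add: C_def)
  define eps where "eps = m / (C + 1)"
  have epos: "0 < eps" using mpos C0 by (simp add: eps_def)
  have epsC: "eps * C \<le> m"
  proof -
    have "eps * C = m * (C / (C + 1))" using C0 by (simp add: eps_def)
    also have "\<dots> \<le> m * 1" using mpos C0 by (intro mult_left_mono) auto
    finally show ?thesis by simp
  qed
  let ?s = "?r + eps *\<^sub>R Zh"
  have herm_s: "adj ?s = ?s" by (simp add: adj_add adj_scaleR gibbs_herm herZ)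
  have "0 \<le> Re (qf ?s v)" for v
  proof (cases "v = 0")
    case True then show ?thesis by (simp add: qf_zero_vec)
  next
    case False
    define u where "u = (1 / norm v) *\<^sub>R v"
    have uS: "u \<in> ?S" using False by (simp add: u_def)
    have vu: "v = norm v *\<^sub>R u" using False by (simp add: u_def)
    have "Re (qf ?s u) = Re (qf ?r u) + eps * Re (qf Zh u)" by (simp add: qf_add qf_scaleR)
    moreover have "m \<le> Re (qf ?r u)" using v0(2)[OF uS] by (simp add: m_def)
    moreover have "- C \<le> Re (qf Zh u)"
      using v1(2)[OF uS] abs_Re_le_cmod[of "qf Zh u"] by (simp add: C_def abs_le_iff)
    moreover have "eps * (- C) \<le> eps * Re (qf Zh u)"
      using epos \<open>- C \<le> Re (qf Zh u)\<close> by (intro mult_left_mono) auto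
    ultimately have "m - eps * C \<le> Re (qf ?s u)" by simp
    then have "0 \<le> Re (qf ?s u)" using epsC by linarith
    then show ?thesis by (subst vu) (simp add: qf_vscale)
  qed
  then have "psd ?s" using qf_herm_Im[OF herm_s] by (simp add: psd_qf)
  moreover have "trace ?s = 1" by (simp add: trace_add trace_scaleR trZ trace_gibbs)
  ultimately have "density ?s" using herm_s by (simp add: density_def hermitian_def)
  then show ?thesis using epos by blast
qed

lemma W_nonempty:
  assumes "CARD('d) \<ge> 2"
  shows "\<exists>X. X \<noteq> 0 \<and> ip s X (mat 1) = 0"
proof -
  obtain i :: 'd where True by blast
  have "UNIV \<noteq> {i}"
  proof
    assume h: "UNIV = {i}"
    have "CARD('d) = card {i}" by (simp only: h)
    then have "CARD('d) = 1" by simp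
    then show False using assms by simp
  qed
  then obtain j where ji: "j \<noteq> i" by blast
  define E :: "'d cmat" where "E = (\<chi> a b. if a = i \<and> b = j then 1 else 0)"
  define al where "al = cnj (ip s E (mat 1) / ip s (mat 1) (mat 1))"
  define Y where "Y = E - cscale al (mat 1)"
  have n1: "ip s (mat 1) (mat 1) \<noteq> 0" using mat1_nonzero by (simp add: sip_self_zero)
  have "ip s Y (mat 1) = 0" using n1 by (simp add: Y_def al_def sip_diff_left sip_cscale_left)
  moreover have "Y $ i $ j = 1" using ji by (simp add: Y_def E_def mat_def)
  then have "Y \<noteq> 0" by auto
  ultimately show ?thesis by blast
qed

end

lemma geom_bound:
  fixes lam :: real
  assumes "0 \<le> lam" "lam < 1"
  shows "(\<Sum>t=1..Kn. lam ^ t) \<le> 1 / (1 - lam)"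
proof (cases "lam = 0")
  case True
  then have "(\<Sum>t=1..Kn. lam ^ t) = 0" by (intro sum.neutral) auto
  then show ?thesis using assms by simp
next
  case False
  then show ?thesis using geometric_sum_less[of lam "{1..Kn}"] assms by simp
qed



section \<open>Correlation and covariance formulas\<close>

lemma kraus_duality: "trace (adj A ** kraus I K Y) = trace (adj (kraus_adj I K A) ** Y)"
  by (simp add: kraus_def kraus_adj_def wkraus_duality)

lemma Mhat_duality:
  "trace (adj A ** Mhat \<beta> H U Ob Y) = trace (adj (Mhat_adj \<beta> H U Ob A) ** Y)"
  by (simp add: Mhat_def Mhat_adj_def wkraus_duality)

lemma E_dual_pow:
  fixes Bv :: "'d::finite cmat"
  shows "trace (adj Bv ** ((kraus U Ob \<circ> kraus I K \<circ> kraus U Ob) ^^ t) Y) =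
         trace (adj (((\<lambda>X. kraus_adj U Ob (kraus_adj I K (kraus_adj U Ob X))) ^^ t) Bv) ** Y)"
proof (induction t arbitrary: Bv)
  case 0
  then show ?case by simp
next
  case (Suc t)
  let ?Et = "\<lambda>X. kraus_adj U Ob (kraus_adj I K (kraus_adj U Ob X))"
  have "trace (adj Bv ** ((kraus U Ob \<circ> kraus I K \<circ> kraus U Ob) ^^ Suc t) Y) =
        trace (adj Bv ** kraus U Ob (kraus I K (kraus U Ob (((kraus U Ob \<circ> kraus I K \<circ> kraus U Ob) ^^ t) Y))))"
    by simp
  also have "\<dots> = trace (adj (?Et Bv) ** ((kraus U Ob \<circ> kraus I K \<circ> kraus U Ob) ^^ t) Y)"
    by (simp add: kraus_duality)
  also have "\<dots> = trace (adj ((?Et ^^ t) (?Et Bv)) ** Y)" by (rule Suc.IH)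
  also have "(?Et ^^ t) (?Et Bv) = (?Et ^^ Suc t) Bv" by (simp only: funpow_Suc_right o_def)
  finally show ?case .
qed

context gb
begin

lemma cor_formula:
  assumes Nch: "is_channel I K" and Mch: "is_channel U Ob"
    and saN: "\<And>A B. ip s A (kraus_adj I K B) = ip s (kraus_adj I K A) B"
    and saH: "\<And>A B. ip s A (Mhat_adj \<beta> H U Ob B) = ip s (Mhat_adj \<beta> H U Ob A) B"
  shows "Cor \<beta> H I K U Ob t =
     Re (ip s (kraus_adj U Ob (((\<lambda>X. kraus_adj U Ob (kraus_adj I K (kraus_adj U Ob X))) ^^ t)
              (Mhat_adj \<beta> H U Ob (mat 1)))) (kraus_adj I K (Mhat_adj \<beta> H U Ob (mat 1))))"
proof -
  let ?A = "Mhat_adj \<beta> H U Ob (mat 1)"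
  let ?Et = "\<lambda>X. kraus_adj U Ob (kraus_adj I K (kraus_adj U Ob X))"
  let ?E = "kraus U Ob \<circ> kraus I K \<circ> kraus U Ob"
  let ?Eh = "kraus U Ob \<circ> kraus I K \<circ> Mhat \<beta> H U Ob"
  let ?B = "(?Et ^^ t) ?A"
  have trEh: "trace (?Eh Y) = trace (adj ?A ** Y)" for Y
  proof -
    have "trace (?Eh Y) = trace (Mhat \<beta> H U Ob Y)" by (simp add: kraus_trace[OF Mch] kraus_trace[OF Nch])
    also have "\<dots> = trace (adj ?A ** Y)" using Mhat_duality[of "mat 1" \<beta> H U Ob Y] by simp
    finally show ?thesis .
  qed
  have "Cor \<beta> H I K U Ob t = Re (trace (?Eh ((?E ^^ t) (?Eh (gibbs \<beta> H)))))"
    by (simp add: Cor_def Let_def)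
  also have "\<dots> = Re (trace (adj ?A ** (?E ^^ t) (?Eh (gibbs \<beta> H))))" by (simp only: trEh)
  also have "\<dots> = Re (trace (adj ?B ** ?Eh (gibbs \<beta> H)))" by (simp only: E_dual_pow)
  also have "\<dots> = Re (trace (adj (Mhat_adj \<beta> H U Ob (kraus_adj I K (kraus_adj U Ob ?B))) ** gibbs \<beta> H))"
    by (simp add: kraus_duality Mhat_duality)
  also have "\<dots> = Re (ip s (Mhat_adj \<beta> H U Ob (kraus_adj I K (kraus_adj U Ob ?B))) (mat 1))"
    by (simp add: sip_one_right)
  also have "\<dots> = Re (ip s (kraus_adj I K (kraus_adj U Ob ?B)) ?A)" by (simp add: saH)
  also have "\<dots> = Re (ip s (kraus_adj U Ob ?B) (kraus_adj I K ?A))" by (simp add: saN)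
  finally show ?thesis .
qed

lemma trace_Orho_real:
  "trace (Om ** gibbs \<beta> H ** adj Om) = of_real (Re (trace (Om ** gibbs \<beta> H ** adj Om)))"
proof -
  have "trace ((Om ** gibbs \<beta> H) ** adj Om) = trace (adj Om ** (Om ** gibbs \<beta> H))" by (rule trace_mul_sym)
  also have "\<dots> = trace (adj (Om ** gp (1/2)) ** (Om ** gp (1/2)))"
    using trace_rho_sq[of Om] by (simp add: matrix_mul_assoc)
  finally have "Im (trace (Om ** gibbs \<beta> H ** adj Om)) = 0" using frob_Im by simp
  then show ?thesis by (simp add: complex_eq_iff)
qed

lemma A_in_W:
  assumes Mch: "is_channel U Ob"
  shows "ip s (Mhat_adj \<beta> H U Ob (mat 1)) (mat 1) = 0"
proof -
  let ?r = "gibbs \<beta> H"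
  define p where "p u = Re (trace (Ob u ** ?r ** adj (Ob u)))" for u
  define E where "E = Exp U Ob ?r"
  have tp: "trace (Ob u ** ?r ** adj (Ob u)) = of_real (p u)" for u
    unfolding p_def by (rule trace_Orho_real)
  have sp: "(\<Sum>u\<in>U. p u) = 1"
  proof -
    have "trace (kraus U Ob ?r) = (\<Sum>u\<in>U. of_real (p u))"
      by (simp add: kraus_def wkraus_def trace_sum tp)
    then have "(\<Sum>u\<in>U. p u) = Re (trace (kraus U Ob ?r))" by simp
    also have "\<dots> = 1" by (simp add: kraus_trace[OF Mch] trace_gibbs)
    finally show ?thesis .
  qed
  have ex: "E = (\<Sum>u\<in>U. u * p u)" by (simp add: E_def Exp_def p_def)
  have "(\<Sum>u\<in>U. (u - E) * p u) = (\<Sum>u\<in>U. u * p u) - E * (\<Sum>u\<in>U. p u)"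
    by (simp add: left_diff_distrib sum_subtractf sum_distrib_left)
  also have "\<dots> = 0" by (simp add: sp ex)
  finally have z: "(\<Sum>u\<in>U. (u - E) * p u) = 0" .
  have "ip s (Mhat_adj \<beta> H U Ob (mat 1)) (mat 1) = trace (Mhat \<beta> H U Ob ?r)"
    using Mhat_duality[of "mat 1" \<beta> H U Ob ?r] by (simp add: sip_one_right)
  also have "\<dots> = (\<Sum>u\<in>U. of_real (u - E) * of_real (p u))"
    by (simp add: Mhat_def wkraus_def trace_sum trace_scaleR tp E_def)
  also have "\<dots> = of_real (\<Sum>u\<in>U. (u - E) * p u)" by simp
  also have "\<dots> = 0" using z by simp
  finally show ?thesis .
qed

lemma Re_complex_of_real_mult: "Re (complex_of_real a * z) = a * Re z"
  by simp

lemma Re_trace_wk: "Re (trace (wkraus I w K V)) = (\<Sum>u\<in>I. w u * Re (trace (K u ** V ** adj (K u))))"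
  by (simp add: wkraus_def trace_sum trace_scaleR)

lemma wk_inner: "M ** wkraus I w L V ** adj M = (\<Sum>x\<in>I. w x *\<^sub>R (M ** L x ** V ** adj (L x) ** adj M))"
  unfolding wkraus_def
  by (simp only: sum_mult_right sum_mult_left scaleR_mult_left scaleR_mult_right matrix_mul_assoc)

lemma cov_formula:
  assumes saH: "\<And>A B. ip s A (Mhat_adj \<beta> H U Ob B) = ip s (Mhat_adj \<beta> H U Ob A) B"
  shows "Cov U Ob (gibbs \<beta> H) = Re (ip s (Mhat_adj \<beta> H U Ob (mat 1)) (Mhat_adj \<beta> H U Ob (mat 1)))"
proof -
  let ?r = "gibbs \<beta> H"
  let ?A = "Mhat_adj \<beta> H U Ob (mat 1)"
  let ?E = "Exp U Ob ?r"
  let ?w = "\<lambda>u. u - ?E"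
  have "Re (trace (Mhat \<beta> H U Ob (Mhat \<beta> H U Ob ?r))) =
        (\<Sum>y\<in>U. ?w y * Re (trace (Ob y ** wkraus U ?w Ob ?r ** adj (Ob y))))"
    unfolding Mhat_def by (rule Re_trace_wk)
  also have "\<dots> = (\<Sum>y\<in>U. ?w y * (\<Sum>x\<in>U. ?w x * Re (trace (Ob y ** Ob x ** ?r ** adj (Ob x) ** adj (Ob y)))))"
    by (simp only: wk_inner trace_sum trace_scaleR Re_sum Re_complex_of_real_mult)
  also have "\<dots> = (\<Sum>y\<in>U. \<Sum>x\<in>U. ?w x * ?w y * Re (trace (Ob y ** Ob x ** ?r ** adj (Ob x) ** adj (Ob y))))"
    by (simp add: sum_distrib_left mult_ac)
  also have "\<dots> = (\<Sum>x\<in>U. \<Sum>y\<in>U. ?w x * ?w y * Re (trace (Ob y ** Ob x ** ?r ** adj (Ob x) ** adj (Ob y))))"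
    by (rule sum.swap)
  also have "\<dots> = Cov U Ob ?r"
    unfolding Cov_def by (simp add: mult_ac)
  finally have "Re (trace (Mhat \<beta> H U Ob (Mhat \<beta> H U Ob ?r))) = Cov U Ob ?r" .
  moreover have "trace (Mhat \<beta> H U Ob (Mhat \<beta> H U Ob ?r)) = ip s ?A ?A"
  proof -
    have "trace (Mhat \<beta> H U Ob (Mhat \<beta> H U Ob ?r)) = trace (adj ?A ** Mhat \<beta> H U Ob ?r)"
      using Mhat_duality[of "mat 1" \<beta> H U Ob] by simp
    also have "\<dots> = trace (adj (Mhat_adj \<beta> H U Ob ?A) ** ?r)" by (rule Mhat_duality)
    also have "\<dots> = ip s (Mhat_adj \<beta> H U Ob ?A) (mat 1)" by (simp add: sip_one_right)
    also have "\<dots> = ip s ?A ?A" by (simp add: saH)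
    finally show ?thesis .
  qed
  ultimately show ?thesis by simp
qed

end



lemma cscale_neg_swap: "cscale (- c) (A - B) = cscale c (B - A)"
  by (simp add: vec_eq_iff algebra_simps)

lemma cscale_zero_iff: "c \<noteq> 0 \<Longrightarrow> cscale c A = 0 \<longleftrightarrow> A = 0"
  by (auto simp: vec_eq_iff)

theorem lemma5p6:
  fixes n :: nat and H :: "'d::finite cmat" and \<beta> s :: real
    and I :: "'a set" and K :: "'a \<Rightarrow> 'd cmat"
    and U :: "real set" and Ob :: "real \<Rightarrow> 'd cmat"
    and Kn :: nat
  assumes qubits: "CARD('d) = 2 ^ n" and n_pos: "n \<ge> 1"
    and herm: "hermitian H" and beta_pos: "\<beta> > 0"
    and N_channel: "is_channel I K" and M_channel: "is_channel U Ob"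
    and N_db: "detailed_balance \<beta> H s (kraus_adj I K)"
    and M_db: "detailed_balance \<beta> H s (kraus_adj U Ob)"
    and N_fixed: "kraus I K (gibbs \<beta> H) = gibbs \<beta> H"
    and N_unique: "\<And>\<sigma>. density \<sigma> \<Longrightarrow> kraus I K \<sigma> = \<sigma> \<Longrightarrow> \<sigma> = gibbs \<beta> H"
    and N_spec: "\<And>c X. X \<noteq> 0 \<Longrightarrow> kraus I K X = cscale c X \<Longrightarrow>
                   c \<in> \<real> \<and> 0 \<le> Re c \<and> Re c \<le> 1"
    and Mhat_db: "detailed_balance \<beta> H s (Mhat_adj \<beta> H U Ob)"
    and V_pos: "Var U Ob (gibbs \<beta> H) > 0"
    and K_pos: "Kn \<ge> 1"
  shows "t_aut \<beta> H I K U Ob Kn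
           \<le> (Cov U Ob (gibbs \<beta> H) / Var U Ob (gibbs \<beta> H)) / gap \<beta> H s (kraus_adj I K) + 1/2"
proof -
  interpret gb \<beta> H using herm by unfold_locales
  let ?r = "gibbs \<beta> H"
  let ?Nt = "kraus_adj I K" and ?Mt = "kraus_adj U Ob" and ?Ht = "Mhat_adj \<beta> H U Ob"
  let ?Nc = "kraus I K" and ?Mc = "kraus U Ob"
  have saN: "\<And>A B. ip s A (?Nt B) = ip s (?Nt A) B" using N_db by (simp add: detailed_balance_def)
  have saM: "\<And>A B. ip s A (?Mt B) = ip s (?Mt A) B" using M_db by (simp add: detailed_balance_def)
  have saH: "\<And>A B. ip s A (?Ht B) = ip s (?Ht A) B" using Mhat_db by (simp add: detailed_balance_def)
  have linN: "linear ?Nt" by (simp add: kraus_adj_def wkraus_adj_linear)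
  have linM: "linear ?Mt" by (simp add: kraus_adj_def wkraus_adj_linear)
  have N1: "?Nt (mat 1) = mat 1" by (rule kraus_adj_one[OF N_channel])
  have M1: "?Mt (mat 1) = mat 1" by (rule kraus_adj_one[OF M_channel])
  have Mfix: "?Mc ?r = ?r" by (rule db_fixed[OF M_db M_channel])
  have intN: "Gam s (?Nt X) = ?Nc (Gam s X)" for X
    using db_intertwine[OF N_db[unfolded kraus_adj_def], of X] by (simp add: kraus_def kraus_adj_def)
  have eigN: "0 \<le> c \<and> c \<le> 1" if X: "X \<noteq> 0" "?Nt X = c *\<^sub>R X" for c X
  proof -
    have "?Nc (Gam s X) = Gam s (c *\<^sub>R X)" using X(2) intN[of X] by simp
    also have "\<dots> = c *\<^sub>R Gam s X" using Gam_linear by (rule linear_scale)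
    also have "\<dots> = cscale (of_real c) (Gam s X)" by (rule scaleR_cscale_eq)
    finally have c1: "?Nc (Gam s X) = cscale (of_real c) (Gam s X)" .
    have c2: "Gam s X \<noteq> 0" using X(1) Gam_zero by blast
    have "(of_real c :: complex) \<in> \<real> \<and> 0 \<le> Re (of_real c :: complex) \<and> Re (of_real c :: complex) \<le> 1"
      by (rule N_spec[OF c2 c1])
    then show ?thesis by simp
  qed
  have eigM: "\<bar>c\<bar> \<le> 1" if "X \<noteq> 0" "?Mt X = c *\<^sub>R X" for c X
    by (rule channel_eig_bound[OF M_channel Mfix that(2) that(1)])
  have eigN0: "0 \<le> c" if "X \<noteq> 0" "?Nt X = c *\<^sub>R X" for c X
    using eigN[OF that] by simp
  have psdN: "0 \<le> Re (ip s Z (?Nt Z))" for Z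
    by (rule psd_from_eig[OF linN saN eigN0])
  have contrM: "Re (ip s (?Mt X) (?Mt X)) \<le> Re (ip s X X)" for X
    by (rule contr_from_eig[OF linM saM eigM])
  have invN: "ip s (?Nt Z) (mat 1) = 0" if "ip s Z (mat 1) = 0" for Z
    using saN[of Z "mat 1"] N1 that by simp
  have invM: "ip s (?Mt Z) (mat 1) = 0" if "ip s Z (mat 1) = 0" for Z
    using saM[of Z "mat 1"] M1 that by simp
  have card2: "CARD('d) \<ge> 2"
    using qubits n_pos power_increasing[of 1 n "2::nat"] by simp
  have neW: "\<exists>X. X \<noteq> 0 \<and> ip s X (mat 1) = 0" by (rule W_nonempty[OF card2])
  have N1': "?Nt (mat 1) = 1 *\<^sub>R mat 1" using N1 by simp
  obtain X0 where X0: "X0 \<noteq> 0" "ip s X0 (mat 1) = 0"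
      "\<forall>X. X \<noteq> 0 \<and> ip s X (mat 1) = 0 \<longrightarrow> rq s ?Nt X \<le> rq s ?Nt X0"
      "?Nt X0 = rq s ?Nt X0 *\<^sub>R X0"
    using var_max[OF linN saN N1' neW] by blast
  define lam where "lam = rq s ?Nt X0"
  have lam01: "0 \<le> lam \<and> lam \<le> 1" using eigN[OF X0(1)] X0(4) by (simp add: lam_def)
  have lam_ne1: "lam \<noteq> 1"
  proof
    assume l1: "lam = 1"
    then have NX0: "?Nt X0 = X0" using X0(4) by (simp add: lam_def)
    define Y where "Y = Gam s X0"
    have Ynz: "Y \<noteq> 0" using X0(1) Gam_zero unfolding Y_def by blast
    have NY: "?Nc Y = Y" using intN[of X0] NX0 by (simp add: Y_def)
    have trY: "trace Y = 0"
    proof -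
      have "trace Y = trace ((gp (1 - s) ** X0) ** gp s)" by (simp add: Y_def Gam_def)
      also have "\<dots> = trace (gp s ** (gp (1 - s) ** X0))" by (rule trace_mul_sym)
      also have "\<dots> = trace ((gp s ** gp (1 - s)) ** X0)" by (simp add: matrix_mul_assoc)
      also have "\<dots> = trace (?r ** X0)" by (simp add: gp_mult gibbs_gp)
      also have "\<dots> = trace (adj (adj X0 ** ?r))" by (simp add: adj_mult gibbs_herm)
      also have "\<dots> = cnj (ip s X0 (mat 1))" by (simp add: trace_adj sip_one_right)
      finally show ?thesis using X0(2) by simp
    qed
    have NadjY: "?Nc (adj Y) = adj Y"
      using wkraus_adjoint[of I "\<lambda>_. 1" K Y] NY by (simp add: kraus_def)
    have "\<exists>Zh. Zh \<noteq> 0 \<and> adj Zh = Zh \<and> ?Nc Zh = Zh \<and> trace Zh = 0"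
    proof (cases "Y + adj Y = 0")
      case False
      show ?thesis
      proof (intro exI conjI)
        show "Y + adj Y \<noteq> 0" by (rule False)
        show "adj (Y + adj Y) = Y + adj Y" by (simp add: adj_add)
        show "?Nc (Y + adj Y) = Y + adj Y" using NY NadjY by (simp add: kraus_def wkraus_add)
        show "trace (Y + adj Y) = 0" using trY by (simp add: trace_add trace_adj)
      qed
    next
      case True
      show ?thesis
      proof (intro exI conjI)
        show "cscale \<i> (Y - adj Y) \<noteq> 0"
        proof
          assume "cscale \<i> (Y - adj Y) = 0"
          then have "Y - adj Y = 0" by (simp add: cscale_zero_iff)
          then have "Y + Y = 0" using True by (metis add_diff_cancel diff_add_cancel eq_iff_diff_eq_0)
          then show False using Ynz by (simp add: vec_eq_iff)
        qed
        show "adj (cscale \<i> (Y - adj Y)) = cscale \<i> (Y - adj Y)"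
          by (simp add: adj_cscale adj_diff cscale_neg_swap)
        show "?Nc (cscale \<i> (Y - adj Y)) = cscale \<i> (Y - adj Y)"
          using NY NadjY by (simp add: kraus_def wkraus_cscale wkraus_diff)
        show "trace (cscale \<i> (Y - adj Y)) = 0" using trY by (simp add: trace_cscale trace_sub trace_adj)
      qed
    qed
    then obtain Zh where Zh: "Zh \<noteq> 0" "adj Zh = Zh" "?Nc Zh = Zh" "trace Zh = 0" by blast
    obtain eps where eps: "eps > 0" "density (?r + eps *\<^sub>R Zh)"
      using perturb_density[OF Zh(2) Zh(4)] by blast
    have "?Nc (?r + eps *\<^sub>R Zh) = ?r + eps *\<^sub>R Zh"
      using N_fixed Zh(3) by (simp add: kraus_def wkraus_add wkraus_scaleR)
    then have "?r + eps *\<^sub>R Zh = ?r" using N_unique eps(2) by blast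
    then have "Zh = 0" using eps(1) by simp
    then show False using Zh(1) by simp
  qed
  have lam0: "0 \<le> lam" and lam_lt: "lam < 1" using lam01 lam_ne1 by auto
  have boundN: "Re (ip s Z (?Nt Z)) \<le> lam * Re (ip s Z Z)" if "ip s Z (mat 1) = 0" for Z
  proof (cases "Z = 0")
    case True then show ?thesis by simp
  next
    case False
    have "rq s ?Nt Z \<le> lam" using X0(3) False that by (simp add: lam_def)
    then show ?thesis using sip_self_pos[OF False, of s] by (simp add: rq_def divide_le_eq)
  qed
  have elt: "Re (ip s X (?Nt X) / ip s X X) = rq s ?Nt X" for X
  proof -
    have "Re (ip s X (?Nt X) / ip s X X) = Re (ip s X (?Nt X) / of_real (Re (ip s X X)))"
      using sip_self_real[of s X] by (metis (no_types))
    then show ?thesis by (simp add: rq_def)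
  qed
  have gap_eq: "gap \<beta> H s ?Nt = 1 - lam"
  proof -
    have "Sup {Re (ip s X (?Nt X) / ip s X X) | X. X \<noteq> 0 \<and> ip s X (mat 1) = 0} = lam"
    proof (rule cSup_eq_maximum)
      show "lam \<in> {Re (ip s X (?Nt X) / ip s X X) | X. X \<noteq> 0 \<and> ip s X (mat 1) = 0}"
        using X0(1,2) by (auto simp: elt lam_def)
      show "x \<le> lam" if "x \<in> {Re (ip s X (?Nt X) / ip s X X) | X. X \<noteq> 0 \<and> ip s X (mat 1) = 0}" for x
        using that X0(3) by (auto simp: elt lam_def)
    qed
    then show ?thesis by (simp add: gap_def)
  qed
  have nrN: "nr s (?Nt X) \<le> lam * nr s X" if "ip s X (mat 1) = 0" for X
  proof -
    have "Re (ip s (?Nt X) (?Nt X)) \<le> lam\<^sup>2 * Re (ip s X X)"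
      by (rule contr_W[OF saN linN psdN invN boundN lam0 that])
    then have "sqrt (Re (ip s (?Nt X) (?Nt X))) \<le> sqrt (lam\<^sup>2 * Re (ip s X X))"
      by (rule real_sqrt_le_mono)
    then show ?thesis using lam0 by (simp add: nr_def real_sqrt_mult)
  qed
  have nrM: "nr s (?Mt X) \<le> nr s X" for X
    unfolding nr_def using contrM by (rule real_sqrt_le_mono)
  define A where "A = ?Ht (mat 1)"
  have AW: "ip s A (mat 1) = 0" unfolding A_def by (rule A_in_W[OF M_channel])
  let ?Et = "\<lambda>X. ?Mt (?Nt (?Mt X))"
  have Bprop: "ip s ((?Et ^^ t) A) (mat 1) = 0 \<and> nr s ((?Et ^^ t) A) \<le> lam ^ t * nr s A" for t
  proof (induction t)
    case 0
    then show ?case using AW by simp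
  next
    case (Suc t)
    let ?B = "(?Et ^^ t) A"
    have W: "ip s ?B (mat 1) = 0" using Suc by simp
    have "ip s (?Et ?B) (mat 1) = 0" using invM[OF invN[OF invM[OF W]]] .
    moreover have "nr s (?Et ?B) \<le> lam ^ Suc t * nr s A"
    proof -
      have "nr s (?Et ?B) \<le> nr s (?Nt (?Mt ?B))" by (rule nrM)
      also have "\<dots> \<le> lam * nr s (?Mt ?B)" by (rule nrN[OF invM[OF W]])
      also have "\<dots> \<le> lam * nr s ?B" using nrM[of ?B] lam0 by (rule mult_left_mono)
      also have "\<dots> \<le> lam * (lam ^ t * nr s A)" using lam0 Suc by (intro mult_left_mono) auto
      finally show ?thesis by simp
    qed
    ultimately show ?case by simp
  qed
  have CorLe: "Cor \<beta> H I K U Ob t \<le> lam ^ Suc t * Re (ip s A A)" for t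
  proof -
    let ?B = "(?Et ^^ t) A"
    have "Cor \<beta> H I K U Ob t = Re (ip s (?Mt ?B) (?Nt A))"
      unfolding A_def by (rule cor_formula[OF N_channel M_channel saN saH])
    also have "\<dots> \<le> nr s (?Mt ?B) * nr s (?Nt A)" by (rule sip_cs_nr)
    also have "\<dots> \<le> (lam ^ t * nr s A) * (lam * nr s A)"
      using Bprop[of t] nrM[of ?B] nrN[OF AW]
      by (intro mult_mono) (auto intro: order_trans nr_nonneg)
    also have "\<dots> = lam ^ Suc t * (nr s A)\<^sup>2" by (simp add: power2_eq_square mult_ac)
    finally show ?thesis by (simp add: nr_sq)
  qed
  have CovEq: "Cov U Ob ?r = Re (ip s A A)"
    unfolding A_def by (rule cov_formula[OF saH])
  define V where "V = Var U Ob ?r"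
  define p where "p = Cov U Ob ?r / V"
  have Vp: "0 < V" using V_pos by (simp add: V_def)
  have p0: "0 \<le> p" using Vp by (simp add: p_def CovEq sip_self_nonneg)
  have tm: "(1 - real t / real Kn) * (Cor \<beta> H I K U Ob (t - 1) / V) \<le> lam ^ t * p"
    if t: "t \<in> {1..Kn}" for t
  proof -
    have f0: "0 \<le> 1 - real t / real Kn" and f1: "1 - real t / real Kn \<le> 1"
      using t K_pos by auto
    have "Cor \<beta> H I K U Ob (t - 1) \<le> lam ^ t * Cov U Ob ?r"
    proof -
      have st: "Suc (t - 1) = t" using t by simp
      have "Cor \<beta> H I K U Ob (t - 1) \<le> lam ^ Suc (t - 1) * Re (ip s A A)" by (rule CorLe)
      then show ?thesis by (simp only: st CovEq)
    qed
    then have c: "Cor \<beta> H I K U Ob (t - 1) / V \<le> lam ^ t * p"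
      using Vp by (simp add: p_def divide_right_mono)
    have "(1 - real t / real Kn) * (Cor \<beta> H I K U Ob (t - 1) / V) \<le> (1 - real t / real Kn) * (lam ^ t * p)"
      using c f0 by (rule mult_left_mono)
    also have "\<dots> \<le> lam ^ t * p"
      using f0 f1 p0 lam0 by (intro mult_left_le_one_le) auto
    finally show ?thesis .
  qed
  have "t_aut \<beta> H I K U Ob Kn = 1/2 + (\<Sum>t=1..Kn. (1 - real t / real Kn) * (Cor \<beta> H I K U Ob (t - 1) / V))"
    by (simp add: t_aut_def V_def)
  also have "\<dots> \<le> 1/2 + (\<Sum>t=1..Kn. lam ^ t * p)"
    by (intro add_left_mono sum_mono tm)
  also have "(\<Sum>t=1..Kn. lam ^ t * p) = p * (\<Sum>t=1..Kn. lam ^ t)"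
    by (simp add: sum_distrib_left mult.commute)
  also have "p * (\<Sum>t=1..Kn. lam ^ t) \<le> p * (1 / (1 - lam))"
    using geom_bound[OF lam0 lam_lt, of Kn] p0 by (rule mult_left_mono)
  finally have "t_aut \<beta> H I K U Ob Kn \<le> 1/2 + p / (1 - lam)" by simp
  then show ?thesis by (simp add: gap_eq p_def V_def)
qed


end
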